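(* Let $\gamma:\mathbb{Z}\to[0,1]$ be a probability distribution on $\mathbb{Z}$ with bounded support and $\gamma(a)\in\mathbb{Q}$ for all $a$. For $n\ge1$ let $\gamma_n$ be the distribution on $\mathbb{Z}_n$ given by $\gamma_n(k)=\sum_{a\equiv k \pmod n}\gamma(a)$. Then either $\gamma$ is symmetric (i.e. $\gamma(a)=\gamma(-a)$ for all $a\in\mathbb{Z}$), or there exists $N$ such that for every prime $n>N$ the random walk on $\mathbb{Z}_n$ with step distribution $\gamma_n$ is reconstructive.
   Context: The random walk on $\mathbb{Z}_n$ with step distribution $\gamma_n$ has $v(1)$ uniform on $\mathbb{Z}_n$ and independent steps with $\mathbb{P}(v(t+1)-v(t)=k)=\gamma_n(k)$. It is reconstructive if, for any two labelings $f_1,f_2:\mathbb{Z}_n\to\{0,1\}$, the distributions of $\{f_1(v(t))\}_{t\ge1}$ and $\{f_2(v(t))\}_{t\ge1}$ coincide only if there is $\ell$ with $f_1(k)=f_2(k+\ell)$ for all $k$. *)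

theory Defs
  imports "HOL-Computational_Algebra.Primes" Complex_Main
begin

definition supp_dist :: "(int \<Rightarrow> real) \<Rightarrow> int set" where
  "supp_dist \<gamma> = {a. \<gamma> a \<noteq> 0}"

definition gamma_mod :: "(int \<Rightarrow> real) \<Rightarrow> nat \<Rightarrow> int \<Rightarrow> real" where
  "gamma_mod \<gamma> n k = (\<Sum>a\<in>{a\<in>supp_dist \<gamma>. a mod int n = k mod int n}. \<gamma> a)"

text \<open>Elements of Z_n are represented by the integers 0..n-1; a labeling is a
  function f :: int => bool (only its values on 0..n-1 matter).
  walk_from gamma n f x bs: probability that, starting at state x, the next
  length bs labels observed are exactly bs.\<close>

fun walk_from :: "(int \<Rightarrow> real) \<Rightarrow> nat \<Rightarrow> (int \<Rightarrow> bool) \<Rightarrow> int \<Rightarrow> bool list \<Rightarrow> real" where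
  "walk_from \<gamma> n f x [] = 1"
| "walk_from \<gamma> n f x (b # bs) =
     (\<Sum>y\<in>{0..<int n}. if f y = b then gamma_mod \<gamma> n (y - x) * walk_from \<gamma> n f y bs else 0)"

text \<open>Finite-dimensional distribution of the label sequence (f(v(1)), f(v(2)), ...)
  with v(1) uniform on Z_n: probability that the first length w labels equal w.\<close>

fun label_prob :: "(int \<Rightarrow> real) \<Rightarrow> nat \<Rightarrow> (int \<Rightarrow> bool) \<Rightarrow> bool list \<Rightarrow> real" where
  "label_prob \<gamma> n f [] = 1"
| "label_prob \<gamma> n f (b # bs) =
     (1 / real n) * (\<Sum>x\<in>{0..<int n}. if f x = b then walk_from \<gamma> n f x bs else 0)"

text \<open>Two label processes have the same distribution iff all their
  finite-dimensional (cylinder) probabilities agree.\<close>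

definition same_label_distr :: "(int \<Rightarrow> real) \<Rightarrow> nat \<Rightarrow> (int \<Rightarrow> bool) \<Rightarrow> (int \<Rightarrow> bool) \<Rightarrow> bool" where
  "same_label_distr \<gamma> n f1 f2 \<longleftrightarrow> (\<forall>w. label_prob \<gamma> n f1 w = label_prob \<gamma> n f2 w)"

definition reconstructive :: "(int \<Rightarrow> real) \<Rightarrow> nat \<Rightarrow> bool" where
  "reconstructive \<gamma> n \<longleftrightarrow>
     (\<forall>f1 f2 :: int \<Rightarrow> bool. same_label_distr \<gamma> n f1 f2 \<longrightarrow>
        (\<exists>l::int. \<forall>k\<in>{0..<int n}. f1 k = f2 ((k + l) mod int n)))"

end

theory Submission
  imports Defs "HOL-Computational_Algebra.Computational_Algebra"
begin

lemma eisenstein_core: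
  fixes A B :: "int poly" and p :: int
  assumes pr: "prime p"
    and dv: "\<And>k. k < degree (A*B) \<Longrightarrow> p dvd coeff (A*B) k"
    and nd0: "\<not> p^2 dvd coeff (A*B) 0"
    and ndl: "\<not> p dvd lead_coeff (A*B)"
  shows "degree A = 0 \<or> degree B = 0"
proof -
  have main: "degree Y = 0" if AB: "X*Y = A*B" and pX: "p dvd coeff X 0" and pY: "\<not> p dvd coeff Y 0"
    for X Y
  proof -
    have X0: "X \<noteq> 0" and Y0: "Y \<noteq> 0" using ndl AB by auto
    have "\<not> p dvd lead_coeff X"
      using ndl AB by (metis dvd_mult2 lead_coeff_mult)
    then have ex: "\<exists>i. \<not> p dvd coeff X i" by blast
    define i where "i = (LEAST i. \<not> p dvd coeff X i)"
    have ni: "\<not> p dvd coeff X i" unfolding i_def using ex by (rule LeastI_ex)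
    have lt: "\<And>k. k < i \<Longrightarrow> p dvd coeff X k" unfolding i_def using not_less_Least by blast
    have ile: "i \<le> degree X"
      using \<open>\<not> p dvd lead_coeff X\<close> unfolding i_def by (simp add: Least_le)
    have "coeff (X*Y) i = (\<Sum>k\<le>i. coeff X k * coeff Y (i-k))" by (rule coeff_mult)
    also have "\<dots> = (\<Sum>k\<in>{..<i}. coeff X k * coeff Y (i-k)) + coeff X i * coeff Y 0"
      by (simp add: lessThan_Suc_atMost[symmetric])
    finally have eq: "coeff (X*Y) i = (\<Sum>k\<in>{..<i}. coeff X k * coeff Y (i-k)) + coeff X i * coeff Y 0" .
    have "p dvd (\<Sum>k\<in>{..<i}. coeff X k * coeff Y (i-k))"
      by (intro dvd_sum) (simp add: lt)
    moreover have "\<not> p dvd coeff X i * coeff Y 0"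
      using pr ni pY by (simp add: prime_dvd_mult_iff)
    ultimately have "\<not> p dvd coeff (X*Y) i" using eq by (metis dvd_add_right_iff)
    then have "\<not> i < degree (X*Y)" using dv AB by metis
    then have "degree X + degree Y \<le> i" using degree_mult_eq[OF X0 Y0] by simp
    then show ?thesis using ile by simp
  qed
  show ?thesis
  proof (rule ccontr)
    assume H: "\<not> (degree A = 0 \<or> degree B = 0)"
    have A0: "A \<noteq> 0" and B0: "B \<noteq> 0" using H by auto
    have "degree (A*B) > 0" using H degree_mult_eq[OF A0 B0] by simp
    then have "p dvd coeff (A*B) 0" using dv by blast
    moreover have c0: "coeff (A*B) 0 = coeff A 0 * coeff B 0" by (simp add: coeff_mult)
    ultimately have "p dvd coeff A 0 \<or> p dvd coeff B 0" using pr by (simp add: prime_dvd_mult_iff)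
    moreover have "\<not> (p dvd coeff A 0 \<and> p dvd coeff B 0)"
    proof
      assume "p dvd coeff A 0 \<and> p dvd coeff B 0"
      then have "p*p dvd coeff A 0 * coeff B 0" by (auto intro: mult_dvd_mono)
      then show False using nd0 c0 by (simp add: power2_eq_square)
    qed
    ultimately show False
      using main[of A B] main[of B A] H by (auto simp: mult.commute)
  qed
qed


definition cyc :: "nat \<Rightarrow> int poly" where
  "cyc n = (\<Sum>i<n. [:0,1:]^i)"

lemma coeff_X_pow: "coeff ([:0,1:]^i) k = (if i = k then 1 else (0::'a::comm_semiring_1))"
  by (induction i arbitrary: k) (auto simp: coeff_pCons split: nat.splits)

lemma coeff_cyc: "coeff (cyc n) k = (if k < n then 1 else 0)"
  unfolding cyc_def coeff_sum by (simp add: coeff_X_pow)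

lemma cyc_mult: "(1 - [:0,1:]) * cyc n = 1 - [:0,1:]^n"
  unfolding cyc_def by (rule one_diff_power_eq[symmetric])

lemma degree_cyc: "n \<ge> 1 \<Longrightarrow> degree (cyc n) = n - 1"
proof -
  assume n: "n \<ge> 1"
  have "coeff (cyc n) (n-1) \<noteq> 0" using n by (simp add: coeff_cyc)
  then have "n - 1 \<le> degree (cyc n)" by (rule le_degree)
  moreover have "degree (cyc n) \<le> n - 1"
    by (rule degree_le) (auto simp: coeff_cyc)
  ultimately show ?thesis by simp
qed

lemma lead_cyc: "n \<ge> 1 \<Longrightarrow> lead_coeff (cyc n) = 1"
  by (simp add: degree_cyc coeff_cyc)

lemma pcompose_pow: "pcompose (p^k) q = (pcompose p q)^k"
  by (induction k) (simp_all add: pcompose_1 pcompose_mult)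

lemma pcompose_X: "pcompose [:0,1:] (q::int poly) = q"
  by (simp add: pcompose_pCons smult_1_left)

definition scyc :: "nat \<Rightarrow> int poly" where
  "scyc n = pcompose (cyc n) [:1,1:]"

lemma scyc_eq: "[:0,1:] * scyc n = [:1,1:]^n - 1"
proof -
  have "pcompose ((1 - [:0,1:]) * cyc n) [:1,1:] = pcompose (1 - [:0,1:]^n) [:1,1::int:]"
    by (simp add: cyc_mult)
  then have "(1 - [:1,1:]) * scyc n = 1 - [:1,1:]^n"
    by (simp add: scyc_def pcompose_mult pcompose_diff pcompose_1 pcompose_pow pcompose_X)
  moreover have "(1 - [:1,1::int:]) = - [:0,1:]" by (simp add: one_pCons)
  ultimately have "- ([:0,1:] * scyc n) = 1 - [:1,1:]^n" by simp
  then have "[:0,1:] * scyc n = - (1 - [:1,1:]^n)" by (metis minus_minus)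
  then show ?thesis by simp
qed

lemma coeff_scyc: "coeff (scyc n) k = (if k < n then int (n choose (k+1)) else 0)"
proof -
  have "coeff (scyc n) k = coeff ([:0,1:] * scyc n) (Suc k)" by simp
  also have "\<dots> = coeff ([:1,1:]^n) (Suc k) - coeff 1 (Suc k)" by (subst scyc_eq) (simp only: coeff_diff)
  also have "\<dots> = (if k < n then int (n choose (k+1)) else 0)"
  proof (cases "k < n")
    case True
    then show ?thesis by (simp add: coeff_linear_poly_power coeff_1)
  next
    case False
    then have "coeff ([:1,1::int:]^n) (Suc k) = 0"
      by (intro coeff_eq_0) (simp add: degree_linear_power)
    then show ?thesis using False by (simp add: coeff_1)
  qed
  finally show ?thesis .
qed


lemma degree_scyc: "n \<ge> 1 \<Longrightarrow> degree (scyc n) = n - 1"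
  by (simp add: scyc_def degree_pcompose degree_cyc)

lemma const_factor_unit:
  fixes A B :: "int poly"
  assumes "A * B = P" "lead_coeff P = 1" "degree A = 0"
  shows "A dvd 1"
proof -
  have "A = [:coeff A 0:]" using assms(3) by (metis degree_0_id)
  moreover have "lead_coeff A * lead_coeff B = 1" using assms(1,2) by (metis lead_coeff_mult)
  then have "coeff A 0 dvd 1" using assms(3) by (metis dvdI)
  ultimately show ?thesis by (metis is_unit_const_poly_iff)
qed

lemma irreducible_cyc:
  assumes pn: "prime n"
  shows "irreducible (cyc n)"
proof (rule irreducibleI)
  have n2: "n \<ge> 2" using pn by (simp add: prime_ge_2_nat)
  show c0: "cyc n \<noteq> 0" using lead_cyc[of n] n2 by auto
  show "\<not> cyc n dvd 1"
  proof
    assume "cyc n dvd 1"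
    then have "degree (cyc n) = 0" by (auto simp: is_unit_poly_iff)
    then show False using degree_cyc[of n] n2 by simp
  qed
  fix A B assume AB: "cyc n = A * B"
  define A' B' where "A' = pcompose A [:1,1:]" and "B' = pcompose B [:1,1:]"
  have AB': "A' * B' = scyc n" unfolding A'_def B'_def scyc_def AB by (simp add: pcompose_mult)
  have ds: "degree (scyc n) = n - 1" using n2 by (simp add: degree_scyc)
  have pr: "prime (int n)" using pn by simp
  have "degree A' = 0 \<or> degree B' = 0"
  proof (rule eisenstein_core[OF pr])
    fix k assume "k < degree (A'*B')"
    then have k: "k + 1 < n" using AB' ds by simp
    have "n dvd (n choose (k+1))" using k n2 pn by (intro dvd_choose_prime) auto
    then show "int n dvd coeff (A'*B') k" using AB' k by (simp add: coeff_scyc)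
  next
    have "coeff (A'*B') 0 = int n" using AB' n2 by (simp add: coeff_scyc)
    moreover have "\<not> (int n)^2 dvd int n"
    proof
      assume "(int n)^2 dvd int n"
      then obtain c where c: "int n = (int n)^2 * c" by (elim dvdE)
      then have "int n * 1 = int n * (int n * c)" by (simp add: power2_eq_square)
      then have "1 = int n * c" using n2 by (metis mult_cancel_left of_nat_eq_0_iff not_numeral_le_zero)
      then have "int n dvd 1" by (metis dvd_triv_left)
      then show False using n2 by simp
    qed
    ultimately show "\<not> (int n)^2 dvd coeff (A'*B') 0" by simp
  next
    have "lead_coeff (A'*B') = 1" using AB' ds n2 by (simp add: coeff_scyc)
    then show "\<not> int n dvd lead_coeff (A'*B')" using n2 by simp
  qed
  then have "degree A = 0 \<or> degree B = 0"
    by (simp add: A'_def B'_def degree_pcompose)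
  moreover have "lead_coeff (cyc n) = 1" using n2 by (simp add: lead_cyc)
  ultimately show "A dvd 1 \<or> B dvd 1"
    using const_factor_unit[of A B "cyc n"] const_factor_unit[of B A "cyc n"] AB
    by (auto simp: mult.commute)
qed


definition fc :: "int fract \<Rightarrow> complex" where
  "fc x = of_int (fst (quot_of_fract x)) / of_int (snd (quot_of_fract x))"

lemma fc_Fract: "b \<noteq> 0 \<Longrightarrow> fc (Fraction_Field.Fract a b) = of_int a / of_int b"
proof -
  assume b: "b \<noteq> 0"
  define p q where "p = fst (quot_of_fract (Fraction_Field.Fract a b))"
    and "q = snd (quot_of_fract (Fraction_Field.Fract a b))"
  have q0: "q \<noteq> 0" unfolding q_def by simp
  have "Fraction_Field.Fract p q = Fraction_Field.Fract a b" unfolding p_def q_def by simp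
  then have "p * b = a * q" using b q0 by (simp add: eq_fract)
  then have "(of_int p :: complex) * of_int b = of_int a * of_int q" by (metis of_int_mult)
  then have "(of_int p :: complex) / of_int q = of_int a / of_int b" using b q0 by (simp add: divide_simps)
  then show ?thesis unfolding fc_def p_def q_def .
qed

lemma fc_add: "fc (x + y) = fc x + fc y"
proof (cases x; cases y)
  fix a b c d assume "x = Fraction_Field.Fract a b" "b \<noteq> 0" "y = Fraction_Field.Fract c d" "d \<noteq> 0"
  then show ?thesis by (simp add: fc_Fract divide_simps)
qed

lemma fc_mult: "fc (x * y) = fc x * fc y"
proof (cases x; cases y)
  fix a b c d assume "x = Fraction_Field.Fract a b" "b \<noteq> 0" "y = Fraction_Field.Fract c d" "d \<noteq> 0"
  then show ?thesis by (simp add: fc_Fract)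
qed

lemma fc_0 [simp]: "fc 0 = 0"
  by (simp add: Zero_fract_def fc_Fract)

lemma fc_1 [simp]: "fc 1 = 1"
  by (simp add: One_fract_def fc_Fract)

lemma fc_to_fract [simp]: "fc (to_fract a) = of_int a"
  by (simp add: to_fract_def fc_Fract)

lemma fc_eq_0: "fc x = 0 \<Longrightarrow> x = 0"
proof (cases x)
  fix a b assume "x = Fraction_Field.Fract a b" "b \<noteq> 0" "fc x = 0"
  then have "a = 0" by (simp add: fc_Fract)
  then show ?thesis using \<open>x = Fraction_Field.Fract a b\<close> by (simp add: Zero_fract_def eq_fract)
qed

lemma fc_sum: "fc (sum f A) = (\<Sum>x\<in>A. fc (f x))"
  by (induction A rule: infinite_finite_induct) (simp_all add: fc_add)

lemma map_fc_mult: "map_poly fc (p * q) = map_poly fc p * map_poly fc q"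
  by (rule poly_eqI) (simp add: coeff_map_poly coeff_mult fc_sum fc_mult)

lemma map_fc_add: "map_poly fc (p + q) = map_poly fc p + map_poly fc q"
  by (rule poly_eqI) (simp add: coeff_map_poly fc_add)

lemma map_fc_fract: "map_poly fc (fract_poly p) = map_poly of_int p"
  by (simp add: map_poly_map_poly o_def)


lemma omega_pow_n: "n \<ge> 1 \<Longrightarrow> cis (2*pi/real n) ^ n = 1"
  by (simp add: DeMoivre)

lemma omega_ne_1: "n \<ge> 2 \<Longrightarrow> cis (2*pi/real n) \<noteq> 1"
proof
  assume n: "n \<ge> 2" and c: "cis (2*pi/real n) = 1"
  then have "cos (2*pi/real n) = 1" by (metis cis.sel(1) one_complex.sel(1))
  then obtain k :: int where k: "2*pi/real n = k*2*pi" by (auto simp: cos_one_2pi_int)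
  then have "pi * (2 / real n - 2 * k) = 0" by (simp add: algebra_simps)
  then have "1 / real n = k" by simp
  moreover have "0 < 1 / real n" "1 / real n < 1" using n by auto
  ultimately show False by (metis of_int_0_less_iff of_int_less_1_iff not_less zero_less_one_class.zero_le_one
        int_one_le_iff_zero_less less_le_not_le)
qed

lemma map_cyc: "map_poly (of_int :: int \<Rightarrow> 'a::comm_ring_1) (cyc n) = (\<Sum>i<n. [:0,1:]^i)"
  by (rule poly_eqI) (simp add: coeff_map_poly coeff_sum coeff_X_pow coeff_cyc)

lemma poly_cyc_omega:
  assumes "prime n"
  shows "poly (map_poly of_int (cyc n)) (cis (2*pi/real n)) = 0"
proof -
  define z where "z = cis (2*pi/real n)"
  have n2: "n \<ge> 2" using assms by (simp add: prime_ge_2_nat)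
  have "poly (map_poly of_int (cyc n)) z = (\<Sum>i<n. z^i)"
    by (simp add: map_cyc poly_sum)
  moreover have "(1 - z) * (\<Sum>i<n. z^i) = 0"
    using one_diff_power_eq[of z n] omega_pow_n[of n] n2 by (simp add: z_def)
  moreover have "1 - z \<noteq> 0" using omega_ne_1[OF n2] by (simp add: z_def)
  ultimately show ?thesis by (simp add: z_def)
qed

lemma content_cyc: "n \<ge> 1 \<Longrightarrow> content (cyc n) = 1"
proof -
  assume n: "n \<ge> 1"
  have "content (cyc n) dvd coeff (cyc n) 0" by (rule content_dvd_coeff)
  then have "content (cyc n) dvd 1" using n by (simp add: coeff_cyc)
  then have "normalize (content (cyc n)) = 1" by (rule is_unit_normalize)
  then show ?thesis by (metis normalize_content)
qed

lemma cyc_indep: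
  assumes pn: "prime n" and dD: "degree D < n"
    and root: "poly (map_poly of_int D) (cis (2*pi/real n)) = 0"
  shows "\<exists>c. D = smult c (cyc n)"
proof -
  define z where "z = cis (2*pi/real n)"
  have n2: "n \<ge> 2" using pn by (simp add: prime_ge_2_nat)
  have irr: "irreducible (cyc n)" using pn by (rule irreducible_cyc)
  have dc: "degree (cyc n) \<noteq> 0" using n2 by (simp add: degree_cyc)
  have irrf: "irreducible (fract_poly (cyc n))"
    using irr nonconst_poly_irreducible_iff[OF dc] by blast
  define ev where "ev p = poly (map_poly fc p) z" for p
  have ev_add: "ev (p + q) = ev p + ev q" for p q by (simp add: ev_def map_fc_add)
  have ev_mult: "ev (p * q) = ev p * ev q" for p q by (simp add: ev_def map_fc_mult)
  have ev_diff: "ev (p - q) = ev p - ev q" for p q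
    using ev_add[of "p - q" q] by simp
  define S where "S = {p. p \<noteq> 0 \<and> ev p = 0}"
  have fPS: "fract_poly (cyc n) \<in> S" using poly_cyc_omega[OF pn] dc
    by (auto simp: S_def ev_def map_fc_fract z_def)
  obtain m where mS: "m \<in> S" and mmin: "\<And>p. p \<in> S \<Longrightarrow> degree m \<le> degree p"
    using ex_has_least_nat[of "\<lambda>p. p \<in> S" _ degree, OF fPS] by blast
  have mdiv: "m dvd p" if "ev p = 0" for p
  proof (rule ccontr)
    assume nd: "\<not> m dvd p"
    then have r0: "p mod m \<noteq> 0" by (simp add: dvd_eq_mod_eq_0)
    have "p mod m = p - (p div m) * m" by (simp add: minus_div_mult_eq_mod)
    then have "ev (p mod m) = 0" using that mS by (simp add: ev_diff ev_mult S_def)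
    then have "p mod m \<in> S" using r0 by (simp add: S_def)
    then have "degree m \<le> degree (p mod m)" by (rule mmin)
    moreover have "degree (p mod m) < degree m" using r0 mS by (intro degree_mod_less') (auto simp: S_def)
    ultimately show False by simp
  qed
  from mdiv[of "fract_poly (cyc n)"] fPS obtain h where gh: "fract_poly (cyc n) = m * h"
    by (auto simp: S_def elim!: dvdE)
  from irreducibleD[OF irrf gh] have "m dvd 1 \<or> h dvd 1" .
  then show ?thesis
  proof
    assume gu: "m dvd 1"
    obtain c where gc: "m = [:c:]" "c dvd 1" using gu by (auto simp: is_unit_poly_iff)
    then have "c \<noteq> 0" using mS by (auto simp: S_def)
    moreover have "fc c = 0" using mS gc by (simp add: S_def ev_def map_poly_pCons)
    then have "c = 0" by (rule fc_eq_0)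
    ultimately show ?thesis by simp
  next
    assume hu: "h dvd 1"
    have evD: "ev (fract_poly D) = 0" using root by (simp add: ev_def map_fc_fract z_def)
    have "fract_poly (cyc n) dvd m" using gh hu
      by (metis dvd_mult_unit_iff dvd_refl)
    also have "m dvd fract_poly D" using mdiv[OF evD] .
    finally have "cyc n dvd D" using content_cyc[of n] n2 by (intro fract_poly_dvdD) auto
    then obtain q where Dq: "D = cyc n * q" by (elim dvdE)
    show ?thesis
    proof (cases "q = 0")
      case True then show ?thesis using Dq by (intro exI[of _ 0]) simp
    next
      case False
      have "cyc n \<noteq> 0" using dc by auto
      then have "degree D = degree (cyc n) + degree q" using Dq False by (simp add: degree_mult_eq)
      then have "degree q = 0" using dD n2 by (simp add: degree_cyc)
      then have "q = [:coeff q 0:]" by (metis degree_0_id)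
      then have "D = cyc n * [:coeff q 0:]" using Dq by metis
      then show ?thesis by (intro exI[of _ "coeff q 0"]) simp
    qed
  qed
qed


context
  fixes \<gamma> :: "int \<Rightarrow> real" and n :: nat
begin

abbreviation "gm \<equiv> gamma_mod \<gamma> n"

fun pwalk :: "(int \<Rightarrow> bool) \<Rightarrow> int \<Rightarrow> bool option list \<Rightarrow> real" where
  "pwalk f x [] = 1"
| "pwalk f x (p # ps) =
     (\<Sum>y\<in>{0..<int n}. gm (y - x) * (case p of None \<Rightarrow> 1 | Some b \<Rightarrow> (if f y = b then 1 else 0)) * pwalk f y ps)"

fun comps :: "bool option list \<Rightarrow> bool list list" where
  "comps [] = [[]]"
| "comps (Some b # ps) = map (Cons b) (comps ps)"
| "comps (None # ps) = map (Cons True) (comps ps) @ map (Cons False) (comps ps)"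

lemma sum_sum_list_swap:
  "(\<Sum>y\<in>A. sum_list (map (F y) L)) = sum_list (map (\<lambda>w. \<Sum>y\<in>A. F y w) L)"
  by (induction L) (simp_all add: sum.distrib)

lemma sum_mult_sum_list:
  "(c::real) * sum_list (map F L) = sum_list (map (\<lambda>w. c * F w) L)"
  by (induction L) (simp_all add: algebra_simps)

lemma if_sum_list: "(if P then sum_list (map F L) else (0::real)) = sum_list (map (\<lambda>w. if P then F w else 0) L)"
  by (induction L) auto

lemma pwalk_comps: "pwalk f x ps = sum_list (map (walk_from \<gamma> n f x) (comps ps))"
proof (induction ps arbitrary: x)
  case Nil
  then show ?case by simp
next
  case (Cons p ps)
  show ?case
  proof (cases p)
    case None
    have "pwalk f x (p # ps) = (\<Sum>y\<in>{0..<int n}. gm (y - x) * pwalk f y ps)"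
      using None by simp
    also have "\<dots> = (\<Sum>y\<in>{0..<int n}. sum_list (map (\<lambda>w. gm (y - x) * walk_from \<gamma> n f y w) (comps ps)))"
      by (simp add: Cons.IH sum_mult_sum_list)
    also have "\<dots> = sum_list (map (\<lambda>w. \<Sum>y\<in>{0..<int n}. gm (y - x) * walk_from \<gamma> n f y w) (comps ps))"
      by (rule sum_sum_list_swap)
    also have "\<dots> = sum_list (map (\<lambda>w. walk_from \<gamma> n f x (True # w) + walk_from \<gamma> n f x (False # w)) (comps ps))"
      by (intro arg_cong[where f=sum_list] map_cong refl) (auto simp: sum.distrib[symmetric] intro!: sum.cong)
    also have "\<dots> = sum_list (map (walk_from \<gamma> n f x) (comps (p # ps)))"
      using None by (simp add: sum_list_addf o_def)
    finally show ?thesis .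
  next
    case (Some b)
    have "pwalk f x (p # ps) = (\<Sum>y\<in>{0..<int n}. (if f y = b then gm (y - x) * pwalk f y ps else 0))"
      using Some by (auto intro!: sum.cong)
    also have "\<dots> = (\<Sum>y\<in>{0..<int n}. sum_list (map (\<lambda>w. if f y = b then gm (y - x) * walk_from \<gamma> n f y w else 0) (comps ps)))"
      by (intro sum.cong refl) (simp add: Cons.IH sum_mult_sum_list)
    also have "\<dots> = sum_list (map (\<lambda>w. \<Sum>y\<in>{0..<int n}. if f y = b then gm (y - x) * walk_from \<gamma> n f y w else 0) (comps ps))"
      by (rule sum_sum_list_swap)
    also have "\<dots> = sum_list (map (walk_from \<gamma> n f x) (comps (p # ps)))"
      using Some by (simp add: o_def)
    finally show ?thesis .
  qed
qed

definition qprob :: "(int \<Rightarrow> bool) \<Rightarrow> bool option list \<Rightarrow> real" where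
  "qprob f ps = (1 / real n) * (\<Sum>x\<in>{0..<int n}. if f x then pwalk f x ps else 0)"

lemma qprob_comps: "qprob f ps = sum_list (map (\<lambda>w. label_prob \<gamma> n f (True # w)) (comps ps))"
proof -
  have "qprob f ps = (1 / real n) * (\<Sum>x\<in>{0..<int n}. sum_list (map (\<lambda>w. if f x then walk_from \<gamma> n f x w else 0) (comps ps)))"
    unfolding qprob_def pwalk_comps by (simp add: if_sum_list)
  also have "\<dots> = (1 / real n) * sum_list (map (\<lambda>w. \<Sum>x\<in>{0..<int n}. if f x then walk_from \<gamma> n f x w else 0) (comps ps))"
    by (simp add: sum_sum_list_swap)
  also have "\<dots> = sum_list (map (\<lambda>w. label_prob \<gamma> n f (True # w)) (comps ps))"
    by (simp add: sum_mult_sum_list)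
  finally show ?thesis .
qed

lemma qprob_same:
  assumes "same_label_distr \<gamma> n f1 f2"
  shows "qprob f1 ps = qprob f2 ps"
  using assms unfolding qprob_comps same_label_distr_def by (simp del: label_prob.simps)


definition Pc :: "(int \<Rightarrow> complex) \<Rightarrow> int \<Rightarrow> complex" where
  "Pc h x = (\<Sum>y\<in>{0..<int n}. of_real (gm (y - x)) * h y)"

definition fv :: "(int \<Rightarrow> bool) \<Rightarrow> int \<Rightarrow> complex" where
  "fv f x = (if f x then 1 else 0)"

fun H :: "(int \<Rightarrow> bool) \<Rightarrow> nat list \<Rightarrow> int \<Rightarrow> complex" where
  "H f [] = (\<lambda>x. 1)"
| "H f (t # ts) = (Pc ^^ t) (\<lambda>y. fv f y * H f ts y)"

fun patt :: "nat list \<Rightarrow> bool option list" where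
  "patt [] = []"
| "patt (t # ts) = replicate (t - 1) None @ Some True # patt ts"

lemma pwalk_None_rep: "of_real (pwalk f x (replicate k None @ ps)) = (Pc ^^ k) (\<lambda>y. of_real (pwalk f y ps)) x"
proof (induction k arbitrary: x)
  case 0 then show ?case by simp
next
  case (Suc k)
  have "of_real (pwalk f x (replicate (Suc k) None @ ps)) =
        (\<Sum>y\<in>{0..<int n}. of_real (gm (y - x)) * of_real (pwalk f y (replicate k None @ ps)))"
    by simp
  also have "\<dots> = Pc ((Pc ^^ k) (\<lambda>y. of_real (pwalk f y ps))) x"
    unfolding Pc_def Suc.IH ..
  finally show ?case by (simp add: funpow_swap1)
qed

lemma pwalk_Some_True: "of_real (pwalk f x (Some True # ps)) = Pc (\<lambda>y. fv f y * of_real (pwalk f y ps)) x"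
  unfolding Pc_def fv_def by (auto intro!: sum.cong)

lemma pwalk_patt: "\<forall>t\<in>set ts. t \<ge> 1 \<Longrightarrow> of_real (pwalk f x (patt ts)) = H f ts x"
proof (induction ts arbitrary: x)
  case Nil then show ?case by simp
next
  case (Cons t ts)
  have t: "t = Suc (t - 1)" using Cons.prems by simp
  have "of_real (pwalk f x (patt (t # ts))) = (Pc ^^ (t-1)) (\<lambda>y. of_real (pwalk f y (Some True # patt ts))) x"
    by (simp add: pwalk_None_rep)
  also have "\<dots> = (Pc ^^ (t-1)) (Pc (\<lambda>y. fv f y * H f ts y)) x"
  proof -
    have IH: "\<And>y. of_real (pwalk f y (patt ts)) = H f ts y" using Cons by simp
    have "(\<lambda>y. of_real (pwalk f y (Some True # patt ts))) = Pc (\<lambda>y. fv f y * H f ts y)"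
      by (rule ext) (simp only: pwalk_Some_True IH)
    then show ?thesis by simp
  qed
  also have "\<dots> = (Pc ^^ t) (\<lambda>y. fv f y * H f ts y) x"
    by (subst (2) t) (simp add: funpow_Suc_right del: funpow.simps)
  finally show ?case by simp
qed

definition Mom :: "(int \<Rightarrow> bool) \<Rightarrow> nat list \<Rightarrow> complex" where
  "Mom f ts = (\<Sum>x\<in>{0..<int n}. fv f x * H f ts x)"

lemma Mom_qprob:
  assumes "n \<ge> 1" "\<forall>t\<in>set ts. t \<ge> 1"
  shows "Mom f ts = of_nat n * of_real (qprob f (patt ts))"
proof -
  have "of_nat n * of_real (qprob f (patt ts)) = (of_real (\<Sum>x\<in>{0..<int n}. if f x then pwalk f x (patt ts) else 0) :: complex)"
    using assms(1) by (simp add: qprob_def)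
  also have "\<dots> = (\<Sum>x\<in>{0..<int n}. fv f x * of_real (pwalk f x (patt ts)))"
    by (auto simp: fv_def intro!: sum.cong)
  also have "\<dots> = Mom f ts"
    unfolding Mom_def using assms(2) by (simp add: pwalk_patt)
  finally show ?thesis by simp
qed

lemma Mom_same:
  assumes "same_label_distr \<gamma> n f1 f2" "n \<ge> 1" "\<forall>t\<in>set ts. t \<ge> 1"
  shows "Mom f1 ts = Mom f2 ts"
  using assms by (simp add: Mom_qprob qprob_same)


definition polyop :: "complex poly \<Rightarrow> (int \<Rightarrow> complex) \<Rightarrow> int \<Rightarrow> complex" where
  "polyop q h x = (\<Sum>t\<le>degree q. coeff q t * (Pc ^^ t) h x)"

fun G :: "(int \<Rightarrow> bool) \<Rightarrow> complex poly list \<Rightarrow> int \<Rightarrow> complex" where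
  "G f [] = fv f"
| "G f (q # qs) = (\<lambda>x. fv f x * polyop q (G f qs) x)"

fun Gapp :: "(int \<Rightarrow> bool) \<Rightarrow> complex poly list \<Rightarrow> (int \<Rightarrow> complex) \<Rightarrow> int \<Rightarrow> complex" where
  "Gapp f [] h = h"
| "Gapp f (q # ps) h = (\<lambda>x. fv f x * polyop q (Gapp f ps h) x)"

definition MomP :: "(int \<Rightarrow> bool) \<Rightarrow> complex poly list \<Rightarrow> complex" where
  "MomP f qs = (\<Sum>x\<in>{0..<int n}. G f qs x)"

lemma polyop_monom: "polyop (monom 1 t) h x = (Pc ^^ t) h x"
proof -
  have "polyop (monom 1 t) h x = (\<Sum>ta\<le>t. if ta = t then (Pc ^^ ta) h x else 0)"
    unfolding polyop_def by (intro sum.cong) (auto simp: degree_monom_eq)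
  then show ?thesis by simp
qed

lemma Gapp_append: "Gapp f (ps @ qs) h = Gapp f ps (Gapp f qs h)"
  by (induction ps) simp_all

lemma G_monom: "G f (map (monom 1) ts) = (\<lambda>x. fv f x * H f ts x)"
proof (induction ts)
  case Nil then show ?case by simp
next
  case (Cons t ts)
  then show ?case by (simp add: polyop_monom)
qed

lemma MomP_monom: "MomP f (map (monom 1) ts) = Mom f ts"
  unfolding MomP_def Mom_def G_monom ..

lemma Pc_sum: "Pc (\<lambda>y. \<Sum>i\<in>I. c i * h i y) x = (\<Sum>i\<in>I. c i * Pc (h i) x)"
  unfolding Pc_def by (simp add: sum_distrib_left sum.swap[of _ I] algebra_simps)

lemma Pcpow_sum: "(Pc ^^ k) (\<lambda>y. \<Sum>i\<in>I. c i * h i y) = (\<lambda>x. \<Sum>i\<in>I. c i * (Pc ^^ k) (h i) x)"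
proof (induction k)
  case 0 then show ?case by simp
next
  case (Suc k)
  show ?case by (rule ext) (simp add: Suc Pc_sum)
qed

lemma polyop_sum: "polyop q (\<lambda>y. \<Sum>i\<in>I. c i * h i y) x = (\<Sum>i\<in>I. c i * polyop q (h i) x)"
  unfolding polyop_def Pcpow_sum by (simp add: sum_distrib_left sum.swap[of _ I] algebra_simps)

lemma Gapp_sum: "Gapp f ps (\<lambda>y. \<Sum>i\<in>I. c i * h i y) = (\<lambda>x. \<Sum>i\<in>I. c i * Gapp f ps (h i) x)"
proof (induction ps)
  case Nil then show ?case by simp
next
  case (Cons q ps)
  show ?case by (rule ext) (simp add: Cons polyop_sum sum_distrib_left algebra_simps)
qed

lemma G_append: "G f (ps @ qs) = Gapp f ps (G f qs)"
  by (induction ps) simp_all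

lemma G_Cons_expand:
  assumes "coeff q 0 = 0"
  shows "G f (q # qs) = (\<lambda>x. \<Sum>t\<in>{1..degree q}. coeff q t * G f (monom 1 t # qs) x)"
proof (rule ext)
  fix x
  have "{..degree q} = insert 0 {1..degree q}" by auto
  then have "G f (q # qs) x = fv f x * (\<Sum>t\<in>insert 0 {1..degree q}. coeff q t * (Pc ^^ t) (G f qs) x)"
    by (simp add: polyop_def)
  also have "\<dots> = (\<Sum>t\<in>{1..degree q}. coeff q t * G f (monom 1 t # qs) x)"
    using assms by (simp add: polyop_monom sum_distrib_left algebra_simps)
  finally show "G f (q # qs) x = (\<Sum>t\<in>{1..degree q}. coeff q t * G f (monom 1 t # qs) x)" .
qed

lemma MomP_ext:
  assumes hyp: "\<And>ts. \<forall>t\<in>set ts. t \<ge> 1 \<Longrightarrow> Mom f1 ts = Mom f2 ts"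
  shows "\<forall>q\<in>set qs. coeff q 0 = 0 \<Longrightarrow> \<forall>t\<in>set ts. t \<ge> 1 \<Longrightarrow>
         MomP f1 (map (monom 1) ts @ qs) = MomP f2 (map (monom 1) ts @ qs)"
proof (induction qs arbitrary: ts)
  case Nil
  then show ?case using hyp by (simp add: MomP_monom)
next
  case (Cons q qs)
  have expand: "MomP f (map (monom 1) ts @ q # qs) =
      (\<Sum>t\<in>{1..degree q}. coeff q t * MomP f (map (monom 1) (ts @ [t]) @ qs))" for f
  proof -
    have "MomP f (map (monom 1) ts @ q # qs) =
        (\<Sum>x\<in>{0..<int n}. Gapp f (map (monom 1) ts) (\<lambda>y. \<Sum>t\<in>{1..degree q}. coeff q t * G f (monom 1 t # qs) y) x)"
      unfolding MomP_def G_append G_Cons_expand[OF Cons.prems(1)[rule_format, OF list.set_intros(1)]] ..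
    also have "\<dots> = (\<Sum>t\<in>{1..degree q}. coeff q t * MomP f (map (monom 1) (ts @ [t]) @ qs))"
      unfolding Gapp_sum MomP_def G_append by (simp add: Gapp_append sum_distrib_left) (rule sum.swap)
    finally show ?thesis .
  qed
  have "MomP f1 (map (monom 1) (ts @ [t]) @ qs) = MomP f2 (map (monom 1) (ts @ [t]) @ qs)"
    if "t \<in> {1..degree q}" for t
    using Cons.IH[of "ts @ [t]"] Cons.prems that by auto
  then show ?case unfolding expand by (intro sum.cong refl) simp
qed

lemma MomP_same:
  assumes "same_label_distr \<gamma> n f1 f2" "n \<ge> 1" "\<forall>q\<in>set qs. coeff q 0 = 0"
  shows "MomP f1 qs = MomP f2 qs"
  using MomP_ext[of f1 f2 qs "[]"] Mom_same[OF assms(1,2)] assms(3) by simp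

end


definition EE :: "nat \<Rightarrow> int \<Rightarrow> complex" where
  "EE n m = cis (2 * pi * of_int m / real n)"

lemma EE_add: "EE n (a + b) = EE n a * EE n b"
  unfolding EE_def by (simp add: cis_mult add_divide_distrib distrib_left)

lemma EE_0 [simp]: "EE n 0 = 1"
  by (simp add: EE_def)

lemma EE_mult_n: "n \<ge> 1 \<Longrightarrow> EE n (int n * k) = 1"
proof -
  assume "n \<ge> 1"
  then have "2 * pi * of_int (int n * k) / real n = 2 * pi * of_int k" by simp
  then show ?thesis unfolding EE_def by simp
qed

lemma EE_mod: "n \<ge> 1 \<Longrightarrow> EE n (a mod int n) = EE n a"
proof -
  assume n: "n \<ge> 1"
  have "EE n a = EE n (a mod int n + int n * (a div int n))" by simp
  also have "\<dots> = EE n (a mod int n)" using n by (simp only: EE_add EE_mult_n) simp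
  finally show ?thesis by simp
qed

lemma EE_cong: "n \<ge> 1 \<Longrightarrow> a mod int n = b mod int n \<Longrightarrow> EE n a = EE n b"
  by (metis EE_mod)

lemma EE_neg: "EE n (- a) * EE n a = 1"
  using EE_add[of n "-a" a] by simp

lemma EE_pow: "EE n a ^ k = EE n (a * int k)"
  unfolding EE_def by (simp add: DeMoivre algebra_simps)

lemma EE_ne1: "n \<ge> 1 \<Longrightarrow> \<not> int n dvd m \<Longrightarrow> EE n m \<noteq> 1"
proof
  assume n: "n \<ge> 1" and nd: "\<not> int n dvd m" and c: "EE n m = 1"
  then have "cos (2 * pi * of_int m / real n) = 1" unfolding EE_def by (metis cis.sel(1) one_complex.sel(1))
  then obtain k :: int where k: "2 * pi * of_int m / real n = k * 2 * pi" by (auto simp: cos_one_2pi_int)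
  then have "pi * (2 * of_int m / real n - 2 * k) = 0" by (simp add: algebra_simps)
  then have "of_int m / real n = of_int k" by simp
  then have "of_int m = of_int k * real n" using n by (simp add: divide_eq_eq)
  then have "m = k * int n" by (metis of_int_eq_iff of_int_mult of_int_of_nat_eq)
  then show False using nd by simp
qed

lemma EE_norm [simp]: "norm (EE n m) = 1"
  by (simp add: EE_def)

lemma sum_range_int: "(\<Sum>x\<in>{0..<int n}. g x) = (\<Sum>i<n. g (int i))"
proof -
  have "{0..<int n} = int ` {..<n}" by (auto simp: image_iff) (metis atLeastLessThan_iff int_nat_eq nat_less_iff lessThan_iff)
  then show ?thesis by (simp add: sum.reindex)
qed

lemma EE_orth:
  assumes n: "n \<ge> 1"
  shows "(\<Sum>x\<in>{0..<int n}. EE n (m * x)) = (if int n dvd m then of_nat n else 0)"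
proof (cases "int n dvd m")
  case True
  then obtain k where "m = int n * k" by (elim dvdE)
  then have "EE n (m * x) = 1" for x using n EE_mult_n[of n "k * x"] by (simp add: mult.assoc)
  then show ?thesis using True by simp
next
  case False
  define z where "z = EE n m"
  have "(\<Sum>x\<in>{0..<int n}. EE n (m * x)) = (\<Sum>i<n. z ^ i)"
    unfolding sum_range_int z_def by (simp add: EE_pow)
  moreover have "(1 - z) * (\<Sum>i<n. z ^ i) = 0"
    using one_diff_power_eq[of z n] n EE_mult_n[of n m] by (simp add: z_def EE_pow mult.commute)
  moreover have "z \<noteq> 1" using EE_ne1[OF n False] by (simp add: z_def)
  ultimately show ?thesis using False by simp
qed

lemma sum_shift:
  assumes n: "n \<ge> 1" and per: "\<And>a. g (a mod int n) = g a"
  shows "(\<Sum>y\<in>{0..<int n}. g (y - x)) = (\<Sum>y\<in>{0..<int n}. g y)"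
proof -
  have "(\<Sum>y\<in>{0..<int n}. g (y - x)) = (\<Sum>y\<in>{0..<int n}. g ((y - x) mod int n))"
    by (simp add: per)
  also have "\<dots> = (\<Sum>y\<in>{0..<int n}. g y)"
    by (rule sum.reindex_bij_witness[where i="\<lambda>d. (d + x) mod int n" and j="\<lambda>y. (y - x) mod int n"])
       (use n in \<open>auto simp: mod_simps\<close>)
  finally show ?thesis .
qed

lemma sum_shift2:
  assumes n: "n \<ge> 1" and per: "\<And>a. g (a mod int n) = g a"
  shows "(\<Sum>y\<in>{0..<int n}. g (x - y)) = (\<Sum>y\<in>{0..<int n}. g y)"
proof -
  have "(\<Sum>y\<in>{0..<int n}. g (x - y)) = (\<Sum>y\<in>{0..<int n}. g ((x - y) mod int n))"
    by (simp add: per)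
  also have "\<dots> = (\<Sum>y\<in>{0..<int n}. g y)"
    by (rule sum.reindex_bij_witness[where i="\<lambda>d. (x - d) mod int n" and j="\<lambda>y. (x - y) mod int n"])
       (use n in \<open>auto simp: mod_simps\<close>)
  finally show ?thesis .
qed


definition hat :: "nat \<Rightarrow> (int \<Rightarrow> complex) \<Rightarrow> int \<Rightarrow> complex" where
  "hat n h j = (\<Sum>y\<in>{0..<int n}. h y * EE n (- (j * y)))"

definition lam :: "(int \<Rightarrow> real) \<Rightarrow> nat \<Rightarrow> int \<Rightarrow> complex" where
  "lam \<gamma> n j = (\<Sum>d\<in>{0..<int n}. of_real (gamma_mod \<gamma> n d) * EE n (j * d))"

lemma gamma_mod_mod: "gamma_mod \<gamma> n (a mod int n) = gamma_mod \<gamma> n a"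
  unfolding gamma_mod_def by simp

lemma hat_cong_fun: "(\<And>y. y \<in> {0..<int n} \<Longrightarrow> h y = h' y) \<Longrightarrow> hat n h j = hat n h' j"
  unfolding hat_def by (intro sum.cong) auto

lemma hat_cong: "n \<ge> 1 \<Longrightarrow> j mod int n = j' mod int n \<Longrightarrow> hat n h j = hat n h j'"
  unfolding hat_def
  by (intro sum.cong refl arg_cong2[where f="(*)"] EE_cong) (auto intro: mod_minus_cong mod_mult_cong)

lemma inversion:
  assumes n: "n \<ge> 1" and x: "x \<in> {0..<int n}"
  shows "(\<Sum>j\<in>{0..<int n}. hat n h j * EE n (j * x)) = of_nat n * h x"
proof -
  have "(\<Sum>j\<in>{0..<int n}. hat n h j * EE n (j * x))
      = (\<Sum>j\<in>{0..<int n}. \<Sum>y\<in>{0..<int n}. h y * EE n ((x - y) * j))"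
    unfolding hat_def sum_distrib_right
    by (intro sum.cong refl) (simp add: mult.assoc EE_add[symmetric] algebra_simps)
  also have "\<dots> = (\<Sum>y\<in>{0..<int n}. h y * (\<Sum>j\<in>{0..<int n}. EE n ((x - y) * j)))"
    by (subst sum.swap) (simp add: sum_distrib_left)
  also have "\<dots> = (\<Sum>y\<in>{0..<int n}. if y = x then of_nat n * h y else 0)"
  proof (intro sum.cong refl)
    fix y assume y: "y \<in> {0..<int n}"
    have "int n dvd (x - y) \<longleftrightarrow> y = x"
    proof
      assume "int n dvd (x - y)"
      then have "(x - y) mod int n = 0" by simp
      then have "x mod int n = y mod int n" by (metis mod_eq_dvd_iff \<open>int n dvd (x - y)\<close>)
      then show "y = x" using x y by simp
    qed simp
    then show "h y * (\<Sum>j\<in>{0..<int n}. EE n ((x - y) * j)) = (if y = x then of_nat n * h y else 0)"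
      by (simp add: EE_orth[OF n])
  qed
  also have "\<dots> = of_nat n * h x" using x by simp
  finally show ?thesis .
qed

lemma hat_Pc:
  assumes n: "n \<ge> 1"
  shows "hat n (Pc \<gamma> n h) j = lam \<gamma> n j * hat n h j"
proof -
  have inner: "(\<Sum>y\<in>{0..<int n}. of_real (gamma_mod \<gamma> n (z - y)) * EE n (- (j * y)))
      = EE n (- (j * z)) * lam \<gamma> n j" for z
  proof -
    have "(\<Sum>y\<in>{0..<int n}. of_real (gamma_mod \<gamma> n (z - y)) * EE n (- (j * y)))
        = (\<Sum>y\<in>{0..<int n}. EE n (- (j * z)) * (of_real (gamma_mod \<gamma> n (z - y)) * EE n (j * (z - y))))"
    proof (intro sum.cong refl)
      fix y
      have e: "EE n (- (j * z)) * EE n (j * (z - y)) = EE n (- (j * y))"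
        by (simp only: EE_add[symmetric]) (simp add: algebra_simps)
      show "of_real (gamma_mod \<gamma> n (z - y)) * EE n (- (j * y)) = EE n (- (j * z)) * (of_real (gamma_mod \<gamma> n (z - y)) * EE n (j * (z - y)))"
        by (simp only: e[symmetric] ac_simps)
    qed
    also have "\<dots> = EE n (- (j * z)) * (\<Sum>y\<in>{0..<int n}. of_real (gamma_mod \<gamma> n (z - y)) * EE n (j * (z - y)))"
      by (simp add: sum_distrib_left)
    also have "(\<Sum>y\<in>{0..<int n}. of_real (gamma_mod \<gamma> n (z - y)) * EE n (j * (z - y))) = lam \<gamma> n j"
    proof -
      have per: "of_real (gamma_mod \<gamma> n (a mod int n)) * EE n (j * (a mod int n)) = of_real (gamma_mod \<gamma> n a) * EE n (j * a)" for a
      proof -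
        have "EE n (j * (a mod int n)) = EE n (j * a)"
          by (rule EE_cong[OF n]) (rule mod_mult_right_eq)
        then show ?thesis by (simp only: gamma_mod_mod)
      qed
      show ?thesis unfolding lam_def
        by (rule sum_shift2[OF n, where g="\<lambda>d. of_real (gamma_mod \<gamma> n d) * EE n (j * d)", OF per])
    qed
    finally show ?thesis .
  qed
  have "hat n (Pc \<gamma> n h) j = (\<Sum>y\<in>{0..<int n}. \<Sum>z\<in>{0..<int n}. h z * (of_real (gamma_mod \<gamma> n (z - y)) * EE n (- (j * y))))"
    unfolding hat_def Pc_def sum_distrib_right by (simp only: ac_simps)
  also have "\<dots> = (\<Sum>z\<in>{0..<int n}. h z * (\<Sum>y\<in>{0..<int n}. of_real (gamma_mod \<gamma> n (z - y)) * EE n (- (j * y))))"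
    by (subst sum.swap) (simp add: sum_distrib_left)
  also have "\<dots> = lam \<gamma> n j * hat n h j"
    unfolding inner hat_def by (simp add: sum_distrib_left ac_simps)
  finally show ?thesis .
qed


lemma hat_Pcpow: "n \<ge> 1 \<Longrightarrow> hat n ((Pc \<gamma> n ^^ t) h) j = lam \<gamma> n j ^ t * hat n h j"
  by (induction t) (simp_all add: hat_Pc)

lemma polyop_spectral:
  assumes n: "n \<ge> 1" and x: "x \<in> {0..<int n}"
  shows "polyop \<gamma> n q h x = (1 / of_nat n) * (\<Sum>j\<in>{0..<int n}. poly q (lam \<gamma> n j) * hat n h j * EE n (j * x))"
proof -
  have pw: "(Pc \<gamma> n ^^ t) h x = (1 / of_nat n) * (\<Sum>j\<in>{0..<int n}. lam \<gamma> n j ^ t * hat n h j * EE n (j * x))" for t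
  proof -
    have "(\<Sum>j\<in>{0..<int n}. lam \<gamma> n j ^ t * hat n h j * EE n (j * x)) = of_nat n * (Pc \<gamma> n ^^ t) h x"
      using inversion[OF n x, of "(Pc \<gamma> n ^^ t) h"] n by (simp add: hat_Pcpow)
    then show ?thesis using n by simp
  qed
  have "polyop \<gamma> n q h x = (\<Sum>t\<le>degree q. coeff q t * ((1 / of_nat n) * (\<Sum>j\<in>{0..<int n}. lam \<gamma> n j ^ t * hat n h j * EE n (j * x))))"
    unfolding polyop_def pw ..
  also have "\<dots> = (1 / of_nat n) * (\<Sum>t\<le>degree q. \<Sum>j\<in>{0..<int n}. coeff q t * lam \<gamma> n j ^ t * hat n h j * EE n (j * x))"
    by (simp add: sum_distrib_left mult.assoc mult.left_commute)
  also have "(\<Sum>t\<le>degree q. \<Sum>j\<in>{0..<int n}. coeff q t * lam \<gamma> n j ^ t * hat n h j * EE n (j * x))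
      = (\<Sum>j\<in>{0..<int n}. \<Sum>t\<le>degree q. coeff q t * lam \<gamma> n j ^ t * hat n h j * EE n (j * x))"
    by (rule sum.swap)
  also have "\<dots> = (\<Sum>j\<in>{0..<int n}. poly q (lam \<gamma> n j) * hat n h j * EE n (j * x))"
    unfolding poly_altdef sum_distrib_right ..
  finally show ?thesis .
qed


definition good :: "(int \<Rightarrow> real) \<Rightarrow> nat \<Rightarrow> bool" where
  "good \<gamma> n \<longleftrightarrow> n \<ge> 1 \<and> inj_on (lam \<gamma> n) {0..<int n} \<and> (\<forall>i\<in>{0..<int n}. lam \<gamma> n i \<noteq> 0)"

lemma lagrange_exists:
  assumes g: "good \<gamma> n" and a: "a \<in> {0..<int n}"
  shows "\<exists>p. coeff p 0 = 0 \<and> (\<forall>i\<in>{0..<int n}. poly p (lam \<gamma> n i) = (if i = a then 1 else 0))"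
proof -
  define R where "R = {0..<int n} - {a}"
  define Q where "Q = [:0,1:] * (\<Prod>i\<in>R. [:- lam \<gamma> n i, 1:])"
  have polyQ: "poly Q z = z * (\<Prod>i\<in>R. (z - lam \<gamma> n i))" for z
    unfolding Q_def by (simp add: poly_prod)
  have inj: "inj_on (lam \<gamma> n) {0..<int n}" and nz: "\<forall>i\<in>{0..<int n}. lam \<gamma> n i \<noteq> 0"
    using g by (auto simp: good_def)
  have Qa: "poly Q (lam \<gamma> n a) \<noteq> 0"
  proof -
    have "\<forall>i\<in>R. lam \<gamma> n a - lam \<gamma> n i \<noteq> 0"
      using inj a by (auto simp: R_def inj_on_def)
    then show ?thesis unfolding polyQ using nz a by (simp add: R_def)
  qed
  define p where "p = smult (1 / poly Q (lam \<gamma> n a)) Q"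
  have "coeff p 0 = 0" by (simp add: p_def Q_def)
  moreover have "poly p (lam \<gamma> n i) = (if i = a then 1 else 0)" if i: "i \<in> {0..<int n}" for i
  proof (cases "i = a")
    case True then show ?thesis using Qa by (simp add: p_def)
  next
    case False
    then have "i \<in> R" using i by (simp add: R_def)
    then have "(\<Prod>j\<in>R. (lam \<gamma> n i - lam \<gamma> n j)) = 0"
      by (intro prod_zero) (auto simp: R_def)
    then show ?thesis using False by (simp add: p_def polyQ)
  qed
  ultimately show ?thesis by blast
qed

definition lag :: "(int \<Rightarrow> real) \<Rightarrow> nat \<Rightarrow> int \<Rightarrow> complex poly" where
  "lag \<gamma> n a = (SOME p. coeff p 0 = 0 \<and> (\<forall>i\<in>{0..<int n}. poly p (lam \<gamma> n i) = (if i = a mod int n then 1 else 0)))"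

lemma lag_props:
  assumes g: "good \<gamma> n"
  shows "coeff (lag \<gamma> n a) 0 = 0 \<and> (\<forall>i\<in>{0..<int n}. poly (lag \<gamma> n a) (lam \<gamma> n i) = (if i = a mod int n then 1 else 0))"
proof -
  have "a mod int n \<in> {0..<int n}" using g by (simp add: good_def)
  from lagrange_exists[OF g this] show ?thesis
    unfolding lag_def by (rule someI_ex)
qed

lemma polyop_lag:
  assumes g: "good \<gamma> n" and x: "x \<in> {0..<int n}"
  shows "polyop \<gamma> n (lag \<gamma> n a) h x = (1 / of_nat n) * hat n h a * EE n (a * x)"
proof -
  have n: "n \<ge> 1" using g by (simp add: good_def)
  have am: "a mod int n \<in> {0..<int n}" using n by simp
  have "polyop \<gamma> n (lag \<gamma> n a) h x = (1 / of_nat n) * (\<Sum>j\<in>{0..<int n}. (if j = a mod int n then hat n h j * EE n (j * x) else 0))"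
    unfolding polyop_spectral[OF n x] using lag_props[OF g, of a]
    by (intro arg_cong2[where f="(*)"] refl sum.cong) auto
  also have "\<dots> = (1 / of_nat n) * (hat n h (a mod int n) * EE n ((a mod int n) * x))"
    using am by simp
  also have "hat n h (a mod int n) = hat n h a" using n by (intro hat_cong) auto
  also have "EE n ((a mod int n) * x) = EE n (a * x)" by (rule EE_cong[OF n]) (rule mod_mult_left_eq)
  finally show ?thesis by simp
qed

fun chain :: "(int \<Rightarrow> real) \<Rightarrow> nat \<Rightarrow> int \<Rightarrow> int \<Rightarrow> nat \<Rightarrow> complex poly list" where
  "chain \<gamma> n j j0 0 = [lag \<gamma> n j]"
| "chain \<gamma> n j j0 (Suc r) = lag \<gamma> n (j + int (Suc r) * j0) # chain \<gamma> n j j0 r"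

lemma hat_shift: "hat n (\<lambda>y. C * h y * EE n (b * y)) a = C * hat n h (a - b)"
proof -
  have "hat n (\<lambda>y. C * h y * EE n (b * y)) a = (\<Sum>y\<in>{0..<int n}. C * (h y * EE n (- ((a - b) * y))))"
  proof (unfold hat_def, intro sum.cong refl)
    fix y
    have e: "EE n (b * y) * EE n (- (a * y)) = EE n (- ((a - b) * y))"
      by (simp only: EE_add[symmetric]) (simp add: algebra_simps)
    have "C * h y * EE n (b * y) * EE n (- (a * y)) = C * h y * (EE n (b * y) * EE n (- (a * y)))"
      by (simp only: mult.assoc)
    also have "\<dots> = C * h y * EE n (- ((a - b) * y))" by (simp only: e)
    finally show "C * h y * EE n (b * y) * EE n (- (a * y)) = C * (h y * EE n (- ((a - b) * y)))"
      by (simp only: mult.assoc)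
  qed
  then show ?thesis by (simp add: hat_def sum_distrib_left)
qed

lemma G_chain:
  assumes g: "good \<gamma> n" and x: "x \<in> {0..<int n}"
  shows "G \<gamma> n f (chain \<gamma> n j j0 r) x =
    (hat n (fv f) j * hat n (fv f) j0 ^ r / of_nat n ^ (r+1)) * fv f x * EE n ((j + int r * j0) * x)"
  using x
proof (induction r arbitrary: x)
  case 0
  then show ?case using polyop_lag[OF g 0] by simp
next
  case (Suc r)
  define C where "C = hat n (fv f) j * hat n (fv f) j0 ^ r / of_nat n ^ (r+1)"
  have "hat n (G \<gamma> n f (chain \<gamma> n j j0 r)) (j + int (Suc r) * j0)
      = hat n (\<lambda>y. C * fv f y * EE n ((j + int r * j0) * y)) (j + int (Suc r) * j0)"
    by (rule hat_cong_fun) (simp add: Suc.IH C_def)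
  also have "\<dots> = C * hat n (fv f) j0"
    by (simp only: hat_shift) (simp add: algebra_simps)
  finally have "G \<gamma> n f (chain \<gamma> n j j0 (Suc r)) x = fv f x * ((1 / of_nat n) * (C * hat n (fv f) j0) * EE n ((j + int (Suc r) * j0) * x))"
    using polyop_lag[OF g Suc.prems] by simp
  then show ?case by (simp add: C_def field_simps)
qed

lemma MomP_chain:
  assumes g: "good \<gamma> n"
  shows "MomP \<gamma> n f (chain \<gamma> n j j0 r) =
    hat n (fv f) j * hat n (fv f) j0 ^ r * hat n (fv f) (- (j + int r * j0)) / of_nat n ^ (r+1)"
proof -
  have "MomP \<gamma> n f (chain \<gamma> n j j0 r) = (\<Sum>x\<in>{0..<int n}.
      (hat n (fv f) j * hat n (fv f) j0 ^ r / of_nat n ^ (r+1)) * fv f x * EE n ((j + int r * j0) * x))"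
    unfolding MomP_def by (intro sum.cong refl) (simp add: G_chain[OF g])
  also have "\<dots> = (hat n (fv f) j * hat n (fv f) j0 ^ r / of_nat n ^ (r+1)) * (\<Sum>x\<in>{0..<int n}. fv f x * EE n ((j + int r * j0) * x))"
    by (simp add: sum_distrib_left mult.assoc)
  also have "(\<Sum>x\<in>{0..<int n}. fv f x * EE n ((j + int r * j0) * x)) = hat n (fv f) (- (j + int r * j0))"
    unfolding hat_def by (intro sum.cong refl) (simp add: algebra_simps)
  finally show ?thesis by simp
qed

lemma chain_coeff0: "good \<gamma> n \<Longrightarrow> \<forall>q\<in>set (chain \<gamma> n j j0 r). coeff q 0 = 0"
  by (induction r) (simp_all add: lag_props)


lemma root_unity_EE:
  assumes n: "n \<ge> 1" and c: "c ^ n = (1::complex)"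
  shows "\<exists>m. c = EE n m"
proof -
  have nc: "norm c = 1" using power_eq_1_iff[OF c] n by auto
  then have c0: "c \<noteq> 0" by auto
  have cc: "c = cis (Arg c)" using cis_Arg[OF c0] nc by (simp add: sgn_div_norm)
  have "cis (real n * Arg c) = 1" using c cc by (metis DeMoivre)
  then have "cos (real n * Arg c) = 1" by (metis cis.sel(1) one_complex.sel(1))
  then obtain k :: int where k: "real n * Arg c = k * 2 * pi" by (auto simp: cos_one_2pi_int)
  then have "Arg c = 2 * pi * of_int k / real n" using n by (simp add: field_simps)
  then show ?thesis using cc by (auto simp: EE_def)
qed

lemma mod_inverse_prime:
  assumes p: "prime n" and j0: "j0 \<in> {0..<int n}" "j0 \<noteq> 0"
  shows "\<exists>u. (u * j0) mod int n = 1"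
proof -
  have "coprime j0 (int n)"
  proof -
    have "\<not> int n dvd j0" using j0 by (auto dest: zdvd_imp_le)
    moreover have pr: "prime (int n)" using p by simp
    ultimately show ?thesis using prime_imp_coprime[OF pr] by (metis coprime_commute)
  qed
  then obtain u v where "u * j0 + v * int n = 1" using bezout_int[of j0 "int n"] by auto
  then have "(u * j0) mod int n = 1 mod int n" by (metis mod_mult_self1 mult.commute)
  moreover have "1 mod int n = 1" using p prime_gt_1_nat by auto
  ultimately show ?thesis by auto
qed

lemma hat0: "hat n h 0 = (\<Sum>y\<in>{0..<int n}. h y)"
  by (simp add: hat_def)

lemma fv_sum_zero:
  assumes "(\<Sum>y\<in>{0..<int n}. fv f y) = 0" "x \<in> {0..<int n}"
  shows "\<not> f x"
proof
  assume fx: "f x"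
  have "(\<Sum>y\<in>{0..<int n}. fv f y) = of_nat (card ({0..<int n} \<inter> Collect f))"
    by (simp add: fv_def sum.If_cases)
  moreover have "card ({0..<int n} \<inter> Collect f) \<noteq> 0" using fx assms(2) by (auto simp: card_eq_0_iff)
  ultimately show False using assms(1) by simp
qed

lemma fv_eq: "fv f1 x = fv f2 y \<Longrightarrow> f1 x = f2 y"
  by (auto simp: fv_def split: if_splits)

lemma recon:
  assumes g: "good \<gamma> n" and p: "prime n" and same: "same_label_distr \<gamma> n f1 f2"
  shows "\<exists>l::int. \<forall>k\<in>{0..<int n}. f1 k = f2 ((k + l) mod int n)"
proof -
  have n: "n \<ge> 1" using g by (simp add: good_def)
  define F1 where "F1 = hat n (fv f1)"
  define F2 where "F2 = hat n (fv f2)"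
  have key: "F1 j * F1 j0 ^ r * F1 (- (j + int r * j0)) = F2 j * F2 j0 ^ r * F2 (- (j + int r * j0))" for j j0 r
  proof -
    have "MomP \<gamma> n f1 (chain \<gamma> n j j0 r) = MomP \<gamma> n f2 (chain \<gamma> n j j0 r)"
      by (rule MomP_same[OF same n chain_coeff0[OF g]])
    then show ?thesis using n by (simp add: MomP_chain[OF g] F1_def F2_def)
  qed
  have s: "F1 0 = F2 0"
  proof -
    have "Mom \<gamma> n f1 [] = Mom \<gamma> n f2 []" by (rule Mom_same[OF same n]) simp
    then show ?thesis by (simp add: Mom_def F1_def F2_def hat0)
  qed
  have inv1: "(\<Sum>j\<in>{0..<int n}. F1 j * EE n (j * x)) = of_nat n * fv f1 x" if "x \<in> {0..<int n}" for x
    unfolding F1_def by (rule inversion[OF n that])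
  have inv2: "(\<Sum>j\<in>{0..<int n}. F2 j * EE n (j * x)) = of_nat n * fv f2 x" if "x \<in> {0..<int n}" for x
    unfolding F2_def by (rule inversion[OF n that])
  show ?thesis
  proof (cases "F1 0 = 0")
    case True
    have "\<not> f1 x" "\<not> f2 x" if "x \<in> {0..<int n}" for x
      using True s that fv_sum_zero[of f1 n x] fv_sum_zero[of f2 n x] by (auto simp: F1_def F2_def hat0)
    then show ?thesis by (intro exI[of _ 0]) auto
  next
    case s0: False
    show ?thesis
    proof (cases "\<forall>j\<in>{0..<int n}. j \<noteq> 0 \<longrightarrow> F1 j = 0 \<and> F2 j = 0")
      case True
      have "f1 x = f2 x" if x: "x \<in> {0..<int n}" for x
      proof -
        have "of_nat n * fv f1 x = (\<Sum>j\<in>{0..<int n}. if j = 0 then F1 0 else 0)"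
          unfolding inv1[OF x, symmetric] using True by (intro sum.cong refl) auto
        also have "\<dots> = (\<Sum>j\<in>{0..<int n}. if j = 0 then F2 0 else 0)" using s by simp
        also have "\<dots> = of_nat n * fv f2 x"
          unfolding inv2[OF x, symmetric] using True by (intro sum.cong refl) auto
        finally show ?thesis using n by (intro fv_eq) simp
      qed
      then show ?thesis by (intro exI[of _ 0]) auto
    next
      case False
      then obtain j0 where j0: "j0 \<in> {0..<int n}" "j0 \<noteq> 0" "F1 j0 \<noteq> 0 \<or> F2 j0 \<noteq> 0" by blast
      have F0: "F1 (- (j + int r * j0)) = F1 0" "F2 (- (j + int r * j0)) = F2 0"
        if "(j + int r * j0) mod int n = 0" for j r
      proof -
        have "int n dvd (j + int r * j0)" using that by (simp add: dvd_eq_mod_eq_0)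
        then have "int n dvd - (j + int r * j0)" by (simp only: dvd_minus_iff)
        then have "(- (j + int r * j0)) mod int n = 0 mod int n" by (simp only: dvd_eq_mod_eq_0 mod_0)
        then show "F1 (- (j + int r * j0)) = F1 0" "F2 (- (j + int r * j0)) = F2 0"
          unfolding F1_def F2_def using n by (auto intro: hat_cong)
      qed
      have "(j0 + int (n - 1) * j0) mod int n = 0" using n by (simp add: algebra_simps of_nat_diff)
      from key[of j0 j0 "n - 1"] F0[OF this] s s0
      have "F1 j0 * F1 j0 ^ (n-1) = F2 j0 * F2 j0 ^ (n-1)" by simp
      then have pw: "F1 j0 ^ n = F2 j0 ^ n" using n by (metis power_Suc Suc_diff_1 less_le_trans zero_less_one)
      have n0: "n \<noteq> 0" using n by simp
      have F1nz: "F1 j0 \<noteq> 0" and F2nz: "F2 j0 \<noteq> 0"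
        using pw j0(3) power_eq_0_iff[of "F1 j0" n] power_eq_0_iff[of "F2 j0" n] n0 by auto
      define c where "c = F1 j0 / F2 j0"
      have "c ^ n = 1" using pw F2nz by (simp add: c_def power_divide)
      then obtain m where cm: "c = EE n m" using root_unity_EE[OF n] by blast
      obtain u where u: "(u * j0) mod int n = 1" using mod_inverse_prime[OF p j0(1,2)] by blast
      define l where "l = - (m * u)"
      have F2F1: "F2 j = F1 j * EE n (l * j)" for j
      proof -
        define r where "r = nat ((- (j * u)) mod int n)"
        have r: "int r = (- (j * u)) mod int n" using n by (simp add: r_def)
        have "(j + int r * j0) mod int n = (j + (- (j * u)) * j0) mod int n"
        proof (rule mod_add_cong[OF refl])
          show "(int r * j0) mod int n = (- (j * u) * j0) mod int n" unfolding r by (rule mod_mult_left_eq)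
        qed
        also have "\<dots> = (j - j * (u * j0)) mod int n"
          by (simp add: algebra_simps)
        also have "\<dots> = (j - j * ((u * j0) mod int n)) mod int n"
          by (rule mod_diff_cong[OF refl]) (rule mod_mult_right_eq[symmetric])
        also have "\<dots> = 0" using u by simp
        finally have rz: "(j + int r * j0) mod int n = 0" .
        from key[of j j0 r] F0[OF rz] s s0
        have "F1 j * F1 j0 ^ r = F2 j * F2 j0 ^ r" by simp
        moreover have "F2 j0 ^ r \<noteq> 0" using F2nz by simp
        ultimately have "F2 j = F1 j * F1 j0 ^ r / F2 j0 ^ r" by (simp add: eq_divide_eq)
        then have "F2 j = F1 j * c ^ r" by (simp add: c_def power_divide)
        also have "c ^ r = EE n (m * int r)" by (simp add: cm EE_pow)
        also have "\<dots> = EE n (l * j)"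
        proof (rule EE_cong[OF n])
          have "(m * int r) mod int n = (m * (- (j * u))) mod int n" unfolding r by (rule mod_mult_right_eq)
          also have "m * (- (j * u)) = l * j" by (simp add: l_def algebra_simps)
          finally show "(m * int r) mod int n = (l * j) mod int n" .
        qed
        finally show ?thesis .
      qed
      have shift: "f2 y = f1 ((y + l) mod int n)" if y: "y \<in> {0..<int n}" for y
      proof -
        have ym: "(y + l) mod int n \<in> {0..<int n}" using n by simp
        have "of_nat n * fv f2 y = (\<Sum>j\<in>{0..<int n}. F1 j * EE n (j * ((y + l) mod int n)))"
          unfolding inv2[OF y, symmetric]
        proof (intro sum.cong refl)
          fix j
          have "EE n (l * j) * EE n (j * y) = EE n (j * (y + l))"
            by (simp only: EE_add[symmetric]) (simp add: algebra_simps)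
          also have "\<dots> = EE n (j * ((y + l) mod int n))"
            by (rule EE_cong[OF n]) (rule mod_mult_right_eq[symmetric])
          finally show "F2 j * EE n (j * y) = F1 j * EE n (j * ((y + l) mod int n))"
            by (simp add: F2F1 mult.assoc)
        qed
        also have "\<dots> = of_nat n * fv f1 ((y + l) mod int n)" by (rule inv1[OF ym])
        finally show ?thesis using n by (intro fv_eq[symmetric]) simp
      qed
      show ?thesis
      proof (intro exI[of _ "- l"] ballI)
        fix k assume k: "k \<in> {0..<int n}"
        have "(k + - l) mod int n \<in> {0..<int n}" using n by simp
        from shift[OF this] have "f2 ((k + - l) mod int n) = f1 (((k + - l) mod int n + l) mod int n)" .
        also have "((k + - l) mod int n + l) mod int n = k"
          using k by (simp add: mod_add_left_eq)
        finally show "f1 k = f2 ((k + - l) mod int n)" by simp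
      qed
    qed
  qed
qed


lemma lam_supp:
  assumes n: "n \<ge> 1" and fin: "finite (supp_dist \<gamma>)"
  shows "lam \<gamma> n j = (\<Sum>a\<in>supp_dist \<gamma>. of_real (\<gamma> a) * EE n (j * a))"
proof -
  let ?S = "supp_dist \<gamma>"
  have "lam \<gamma> n j = (\<Sum>d\<in>{0..<int n}. \<Sum>a\<in>?S. if a mod int n = d then of_real (\<gamma> a) * EE n (j * d) else 0)"
    unfolding lam_def gamma_mod_def
    by (intro sum.cong refl) (auto simp: sum.inter_filter[OF fin] of_real_sum sum_distrib_right intro!: sum.cong)
  also have "\<dots> = (\<Sum>a\<in>?S. \<Sum>d\<in>{0..<int n}. if a mod int n = d then of_real (\<gamma> a) * EE n (j * d) else 0)"
    by (rule sum.swap)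
  also have "\<dots> = (\<Sum>a\<in>?S. of_real (\<gamma> a) * EE n (j * (a mod int n)))"
    using n by (intro sum.cong refl) (simp add: sum.delta)
  also have "\<dots> = (\<Sum>a\<in>?S. of_real (\<gamma> a) * EE n (j * a))"
    by (intro sum.cong refl arg_cong2[where f="(*)"] EE_cong[OF n]) (auto simp: mod_mult_right_eq)
  finally show ?thesis .
qed

lemma common_denom:
  assumes "finite A" "\<forall>a\<in>A. (x a :: real) \<in> \<rat>"
  shows "\<exists>Q::int. Q > 0 \<and> (\<forall>a\<in>A. of_int Q * x a \<in> \<int>)"
  using assms
proof (induction A rule: finite_induct)
  case empty
  then show ?case by (intro exI[of _ 1]) simp
next
  case (insert b A)
  then obtain Q where Q: "Q > 0" "\<forall>a\<in>A. of_int Q * x a \<in> \<int>" by auto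
  from insert.prems have "x b \<in> \<rat>" by simp
  then obtain p q where pq: "q > 0" "x b = of_int p / of_int q" by (elim Rats_cases')
  have "\<forall>a\<in>insert b A. of_int (Q * q) * x a \<in> \<int>"
  proof
    fix a assume "a \<in> insert b A"
    then show "of_int (Q * q) * x a \<in> \<int>"
    proof
      assume "a = b"
      then have "of_int (Q * q) * x a = of_int (Q * p)" using pq by simp
      then show ?thesis by (metis Ints_of_int)
    next
      assume "a \<in> A"
      then have "of_int Q * x a \<in> \<int>" using Q by simp
      then have "of_int q * (of_int Q * x a) \<in> \<int>" by simp
      then show ?thesis by (simp add: algebra_simps)
    qed
  qed
  then show ?case using Q pq by (intro exI[of _ "Q * q"]) simp
qed

lemma omega_pow_EE: "cis (2 * pi / real n) ^ k = EE n (int k)"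
  unfolding EE_def by (simp add: DeMoivre field_simps)

lemma map_of_int_add: "map_poly (of_int :: int \<Rightarrow> 'a::comm_ring_1) (p + q) = map_poly of_int p + map_poly of_int q"
  by (rule poly_eqI) (simp add: coeff_map_poly)

lemma map_of_int_diff: "map_poly (of_int :: int \<Rightarrow> 'a::comm_ring_1) (p - q) = map_poly of_int p - map_poly of_int q"
  by (rule poly_eqI) (simp add: coeff_map_poly)

lemma map_of_int_sum: "map_poly (of_int :: int \<Rightarrow> 'a::comm_ring_1) (\<Sum>a\<in>A. f a) = (\<Sum>a\<in>A. map_poly of_int (f a))"
  by (rule poly_eqI) (simp add: coeff_map_poly coeff_sum)

definition Dp :: "(int \<Rightarrow> int) \<Rightarrow> int set \<Rightarrow> nat \<Rightarrow> int \<Rightarrow> int poly" where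
  "Dp c S n j = (\<Sum>a\<in>S. monom (c a) (nat ((j * a) mod int n)))"

lemma coeff_Dp: "coeff (Dp c S n j) k = (\<Sum>a\<in>S. if nat ((j * a) mod int n) = k then c a else 0)"
  unfolding Dp_def coeff_sum by (intro sum.cong refl) auto

lemma degree_Dp: "finite S \<Longrightarrow> n \<ge> 1 \<Longrightarrow> degree (Dp c S n j) < n"
proof -
  assume fin: "finite S" and n: "n \<ge> 1"
  have "degree (Dp c S n j) \<le> n - 1"
    unfolding Dp_def
  proof (rule degree_sum_le[OF fin])
    fix a assume "a \<in> S"
    have "nat ((j * a) mod int n) \<le> n - 1" using n by (simp add: nat_le_iff of_nat_diff)
    then show "degree (monom (c a) (nat ((j * a) mod int n))) \<le> n - 1"
      using degree_monom_le le_trans by blast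
  qed
  then show ?thesis using n by simp
qed

lemma poly_Dp:
  assumes n: "n \<ge> 1"
  shows "poly (map_poly of_int (Dp c S n j)) (cis (2 * pi / real n)) = (\<Sum>a\<in>S. of_int (c a) * EE n (j * a))"
proof -
  have "poly (map_poly of_int (Dp c S n j)) (cis (2 * pi / real n))
      = (\<Sum>a\<in>S. of_int (c a) * cis (2 * pi / real n) ^ nat ((j * a) mod int n))"
    unfolding Dp_def map_of_int_sum poly_sum by (simp add: map_poly_monom poly_monom)
  also have "\<dots> = (\<Sum>a\<in>S. of_int (c a) * EE n (j * a))"
    unfolding omega_pow_EE using n by (intro sum.cong refl) (simp add: EE_mod)
  finally show ?thesis .
qed

lemma cyc_zero_coeffs:
  assumes p: "prime n" and dD: "degree D < n"
    and root: "poly (map_poly of_int D) (cis (2*pi/real n)) = 0"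
    and z: "k0 < n" "coeff D k0 = 0"
  shows "\<forall>k<n. coeff D k = 0"
proof -
  obtain c where "D = smult c (cyc n)" using cyc_indep[OF p dD root] by blast
  then have "coeff D k = (if k < n then c else 0)" for k by (simp add: coeff_cyc)
  then show ?thesis using z by auto
qed

lemma exists_zero_coeff:
  assumes fin: "finite S" and small: "card S + card S < n"
    and sub: "\<And>k. k < n \<Longrightarrow> coeff D k \<noteq> 0 \<Longrightarrow> k \<in> f ` S \<union> g ` S"
  shows "\<exists>k<n. coeff D k = 0"
proof (rule ccontr)
  assume "\<not> ?thesis"
  then have "{..<n} \<subseteq> f ` S \<union> g ` S" using sub by auto
  then have "card {..<n} \<le> card (f ` S \<union> g ` S)" by (intro card_mono) (use fin in auto)
  also have "\<dots> \<le> card (f ` S) + card (g ` S)" by (rule card_Un_le)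
  also have "\<dots> \<le> card S + card S" by (intro add_mono card_image_le fin)
  finally show False using small by simp
qed


lemma ndvd_small: "x \<noteq> 0 \<Longrightarrow> \<bar>x\<bar> < int n \<Longrightarrow> \<not> int n dvd x"
  using dvd_imp_le_int[of x "int n"] by auto

lemma dvd_small_zero: "int n dvd x \<Longrightarrow> \<bar>x\<bar> < int n \<Longrightarrow> x = 0"
  using ndvd_small by blast

lemma prime_dvd_mult_int: "prime n \<Longrightarrow> int n dvd x * y \<Longrightarrow> int n dvd x \<or> int n dvd y"
  by (simp add: prime_dvd_mult_iff)

lemma mod_eq_dvd: "(a::int) mod m = b mod m \<longleftrightarrow> m dvd a - b"
  by (rule mod_eq_dvd_iff)

context
  fixes c :: "int \<Rightarrow> int" and S :: "int set" and n :: nat and B :: int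
  assumes p: "prime n" and fin: "finite S" and cpos: "\<forall>a\<in>S. c a > 0"
    and bnd: "\<forall>a\<in>S. \<bar>a\<bar> \<le> B" and big: "2 * B * B + 2 * B < int n"
begin

lemma n1: "n \<ge> 1" using prime_gt_1_nat[OF p] by simp

lemma B0: "B \<ge> 0 \<or> S = {}"
  using bnd by force

lemma diff_small: "a \<in> S \<Longrightarrow> b \<in> S \<Longrightarrow> \<bar>a - b\<bar> < int n"
proof -
  assume "a \<in> S" "b \<in> S"
  then have "\<bar>a\<bar> \<le> B" "\<bar>b\<bar> \<le> B" using bnd by auto
  then have "\<bar>a - b\<bar> \<le> 2 * B" by arith
  moreover have "B \<ge> 0" using B0 \<open>a \<in> S\<close> by auto
  then have "2 * B \<le> 2 * B * B + 2 * B" by simp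
  ultimately show ?thesis using big by linarith
qed

lemma add_small: "a \<in> S \<Longrightarrow> b \<in> S \<Longrightarrow> \<bar>a + b\<bar> < int n"
proof -
  assume "a \<in> S" "b \<in> S"
  then have "\<bar>a\<bar> \<le> B" "\<bar>b\<bar> \<le> B" using bnd by auto
  then have "\<bar>a + b\<bar> \<le> 2 * B" by arith
  moreover have "0 \<le> B * B" by simp
  ultimately show ?thesis using big by linarith
qed

lemma elem_small: "a \<in> S \<Longrightarrow> \<bar>a\<bar> < int n"
proof -
  assume "a \<in> S"
  then have "\<bar>a\<bar> \<le> B" using bnd by auto
  moreover have "0 \<le> B * B" by simp
  ultimately show ?thesis using big by linarith
qed

lemma coeff_pos_witness:
  assumes "coeff (Dp c S n j) k \<noteq> 0"
  shows "\<exists>a\<in>S. nat ((j * a) mod int n) = k"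
proof (rule ccontr)
  assume "\<not> ?thesis"
  then have "coeff (Dp c S n j) k = 0" unfolding coeff_Dp by (intro sum.neutral) auto
  with assms show False by simp
qed

lemma coeff_ge:
  assumes "a \<in> S"
  shows "coeff (Dp c S n j) (nat ((j * a) mod int n)) \<ge> c a"
proof -
  have "c a = (if nat ((j * a) mod int n) = nat ((j * a) mod int n) then c a else 0)" by simp
  also have "\<dots> \<le> (\<Sum>a'\<in>S. if nat ((j * a') mod int n) = nat ((j * a) mod int n) then c a' else 0)"
    by (rule member_le_sum[OF assms _ fin]) (use cpos in \<open>auto simp: less_imp_le\<close>)
  finally show ?thesis by (simp add: coeff_Dp)
qed

lemma F_match:
  assumes eqc: "\<forall>k<n. coeff (Dp c S n j) k = coeff (Dp c S n j') k" and a: "a \<in> S"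
  shows "\<exists>b\<in>S. (j * a) mod int n = (j' * b) mod int n"
proof -
  define k where "k = nat ((j * a) mod int n)"
  have kn: "k < n" using n1 by (simp add: k_def nat_less_iff)
  have "coeff (Dp c S n j) k > 0" using coeff_ge[OF a, of j] cpos a unfolding k_def by force
  then have "coeff (Dp c S n j') k \<noteq> 0" using eqc kn by simp
  then obtain b where b: "b \<in> S" "nat ((j' * b) mod int n) = k" using coeff_pos_witness by blast
  then have "(j' * b) mod int n = (j * a) mod int n" using n1 unfolding k_def
    by (subst (asm) eq_nat_nat_iff) auto
  then show ?thesis using b by metis
qed

lemma coeff_unique:
  assumes j: "j \<in> {0..<int n}" "j \<noteq> 0" and a: "a \<in> S"
  shows "coeff (Dp c S n j) (nat ((j * a) mod int n)) = c a"
proof -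
  have jn: "\<not> int n dvd j" using j by (intro ndvd_small) auto
  have iff: "nat ((j * a') mod int n) = nat ((j * a) mod int n) \<longleftrightarrow> a' = a" if a': "a' \<in> S" for a'
  proof
    assume "nat ((j * a') mod int n) = nat ((j * a) mod int n)"
    then have "(j * a') mod int n = (j * a) mod int n" using n1 by (simp add: eq_nat_nat_iff)
    then have "int n dvd j * (a' - a)" by (simp add: mod_eq_dvd algebra_simps)
    then have "int n dvd (a' - a)" using prime_dvd_mult_int[OF p] jn by blast
    have "a' - a = 0" by (rule dvd_small_zero[OF \<open>int n dvd (a' - a)\<close> diff_small[OF a' a]])
    then show "a' = a" by simp
  qed simp
  have "coeff (Dp c S n j) (nat ((j * a) mod int n)) = (\<Sum>a'\<in>S. if a' = a then c a' else 0)"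
    unfolding coeff_Dp by (intro sum.cong refl) (simp add: iff)
  also have "\<dots> = c a" using a fin by simp
  finally show ?thesis .
qed

lemma F_eq_c:
  assumes eqc: "\<forall>k<n. coeff (Dp c S n j) k = coeff (Dp c S n j') k"
    and j: "j \<in> {0..<int n}" "j \<noteq> 0" and j': "j' \<in> {0..<int n}" "j' \<noteq> 0"
    and a: "a \<in> S" and b: "b \<in> S" and ab: "(j * a) mod int n = (j' * b) mod int n"
  shows "c a = c b"
proof -
  have kn: "nat ((j * a) mod int n) < n" using n1 by (simp add: nat_less_iff)
  have "c a = coeff (Dp c S n j) (nat ((j * a) mod int n))" using coeff_unique[OF j a] by simp
  also have "\<dots> = coeff (Dp c S n j') (nat ((j' * b) mod int n))" using eqc kn ab by simp
  also have "\<dots> = c b" using coeff_unique[OF j' b] by simp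
  finally show ?thesis .
qed

lemma comb:
  assumes eqc: "\<forall>k<n. coeff (Dp c S n j) k = coeff (Dp c S n j') k"
    and j: "j \<in> {0..<int n}" and j': "j' \<in> {0..<int n}"
    and a0: "a0 \<in> S" "a0 \<noteq> 0" and amax: "\<forall>a\<in>S. \<bar>a\<bar> \<le> \<bar>a0\<bar>"
  shows "j = j' \<or> (\<forall>a\<in>S. - a \<in> S \<and> c (- a) = c a)"
proof -
  have eqc': "\<forall>k<n. coeff (Dp c S n j') k = coeff (Dp c S n j) k" using eqc by simp
  have a0n: "\<not> int n dvd a0" using a0 elem_small by (intro ndvd_small) auto
  have pr: "prime (int n)" using p by simp
  show ?thesis
  proof (cases "j = 0")
    case j0: True
    show ?thesis
    proof (cases "j' = 0")
      case True then show ?thesis using j0 by simp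
    next
      case False
      obtain a where "a \<in> S" "(j' * a0) mod int n = (j * a) mod int n"
        using F_match[OF eqc' a0(1)] by blast
      then have "int n dvd j' * a0" using j0 by (simp add: mod_eq_0_iff_dvd)
      moreover have "\<not> int n dvd j'" using j' False by (intro ndvd_small) auto
      ultimately show ?thesis using prime_dvd_mult_int[OF p] a0n by blast
    qed
  next
    case jnz: False
    have jn: "\<not> int n dvd j" using j jnz by (intro ndvd_small) auto
    show ?thesis
    proof (cases "j' = 0")
      case True
      obtain b where "b \<in> S" "(j * a0) mod int n = (j' * b) mod int n"
        using F_match[OF eqc a0(1)] by blast
      then have "int n dvd j * a0" using True by (simp add: mod_eq_0_iff_dvd)
      then show ?thesis using prime_dvd_mult_int[OF p] a0n jn by blast
    next
      case j'nz: False
      have j'n: "\<not> int n dvd j'" using j' j'nz by (intro ndvd_small) auto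
      obtain a1 where a1: "a1 \<in> S" "(j * a0) mod int n = (j' * a1) mod int n"
        using F_match[OF eqc a0(1)] by blast
      obtain am where am: "am \<in> S" "(j' * a0) mod int n = (j * am) mod int n"
        using F_match[OF eqc' a0(1)] by blast
      have "((j * a0) * (j' * a0)) mod int n = ((j' * a1) * (j * am)) mod int n"
        by (rule mod_mult_cong[OF a1(2) am(2)])
      then have "int n dvd (j * a0) * (j' * a0) - (j' * a1) * (j * am)" by (simp add: mod_eq_dvd)
      moreover have "(j * a0) * (j' * a0) - (j' * a1) * (j * am) = j * (j' * (a0 * a0 - a1 * am))"
        by (simp add: algebra_simps)
      ultimately have "int n dvd j * (j' * (a0 * a0 - a1 * am))" by simp
      then have "int n dvd a0 * a0 - a1 * am" using prime_dvd_mult_int[OF p] jn j'n by blast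
      moreover have "\<bar>a0 * a0 - a1 * am\<bar> < int n"
      proof -
        have "\<bar>a0\<bar> \<le> B" "\<bar>a1\<bar> \<le> B" "\<bar>am\<bar> \<le> B" using bnd a0 a1 am by auto
        then have "\<bar>a0\<bar> * \<bar>a0\<bar> \<le> B * B" "\<bar>a1\<bar> * \<bar>am\<bar> \<le> B * B"
          by (intro mult_mono; simp)+
        moreover have "\<bar>a0 * a0 - a1 * am\<bar> \<le> \<bar>a0 * a0\<bar> + \<bar>a1 * am\<bar>" by (rule abs_triangle_ineq4)
        ultimately have "\<bar>a0 * a0 - a1 * am\<bar> \<le> 2 * B * B" by (simp only: abs_mult)
        moreover have "B \<ge> 0" using B0 a0 by auto
        ultimately show ?thesis using big by linarith
      qed
      ultimately have "a0 * a0 - a1 * am = 0" by (rule dvd_small_zero)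
      then have sq: "a0 * a0 = a1 * am" by simp
      have "\<bar>a0\<bar> * \<bar>a0\<bar> = \<bar>a1\<bar> * \<bar>am\<bar>" by (simp only: abs_mult[symmetric] sq)
      also have "\<dots> \<le> \<bar>a1\<bar> * \<bar>a0\<bar>" by (intro mult_left_mono) (use amax am(1) in auto)
      finally have le: "\<bar>a0\<bar> * \<bar>a0\<bar> \<le> \<bar>a1\<bar> * \<bar>a0\<bar>" .
      have "\<bar>a0\<bar> \<le> \<bar>a1\<bar>" using a0(2) by (intro mult_right_le_imp_le[OF le]) simp
      moreover have "\<bar>a1\<bar> \<le> \<bar>a0\<bar>" using amax a1(1) by simp
      ultimately have "\<bar>a1\<bar> = \<bar>a0\<bar>" by simp
      then have "a1 = a0 \<or> a1 = - a0" by (cases "a1 \<ge> 0"; cases "a0 \<ge> 0") auto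
      then show ?thesis
      proof
        assume "a1 = a0"
        then have "int n dvd (j - j') * a0" using a1(2) by (simp add: mod_eq_dvd algebra_simps)
        then have "int n dvd j - j'" using prime_dvd_mult_int[OF p] a0n by blast
        moreover have "\<bar>j - j'\<bar> < int n" using j j' by auto
        ultimately have "j - j' = 0" by (rule dvd_small_zero)
        then show ?thesis by simp
      next
        assume "a1 = - a0"
        then have "int n dvd (j + j') * a0" using a1(2) by (simp add: mod_eq_dvd algebra_simps)
        then have jj: "int n dvd j + j'" using prime_dvd_mult_int[OF p] a0n by blast
        have "- a \<in> S \<and> c (- a) = c a" if a: "a \<in> S" for a
        proof -
          obtain b where b: "b \<in> S" "(j * a) mod int n = (j' * b) mod int n"
            using F_match[OF eqc a] by blast
          have "int n dvd j * a - j' * b" using b(2) by (simp add: mod_eq_dvd)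
          moreover have "int n dvd (j + j') * b" using jj by simp
          ultimately have "int n dvd (j * a - j' * b) + (j + j') * b" by (rule dvd_add)
          moreover have "(j * a - j' * b) + (j + j') * b = j * (a + b)" by (simp add: algebra_simps)
          ultimately have "int n dvd j * (a + b)" by simp
          then have "int n dvd a + b" using prime_dvd_mult_int[OF p] jn by blast
          then have "a + b = 0" using dvd_small_zero add_small[OF a b(1)] by blast
          then have bm: "b = - a" by simp
          have "c a = c b" by (rule F_eq_c[OF eqc j jnz j' j'nz a b(1) b(2)])
          then show ?thesis using b(1) bm by simp
        qed
        then show ?thesis by blast
      qed
    qed
  qed
qed

end


lemma good_large:
  fixes \<gamma> :: "int \<Rightarrow> real"
  assumes nonneg: "\<forall>a. 0 \<le> \<gamma> a"
    and fin: "finite (supp_dist \<gamma>)"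
    and total: "(\<Sum>a\<in>supp_dist \<gamma>. \<gamma> a) = 1"
    and rational: "\<forall>a. \<gamma> a \<in> \<rat>"
    and nonsym: "\<not> (\<forall>a. \<gamma> a = \<gamma> (- a))"
  shows "\<exists>N::nat. \<forall>n. prime n \<and> n > N \<longrightarrow> good \<gamma> n"
proof -
  define S where "S = supp_dist \<gamma>"
  have finS: "finite S" using fin by (simp add: S_def)
  have inS: "a \<in> S \<longleftrightarrow> \<gamma> a \<noteq> 0" for a by (simp add: S_def supp_dist_def)
  have Sne: "S \<noteq> {}" using total by (auto simp: S_def)
  obtain Q :: int where Q: "Q > 0" "\<forall>a\<in>S. of_int Q * \<gamma> a \<in> \<int>"
    using common_denom[OF finS] rational by blast
  define c where "c a = \<lfloor>of_int Q * \<gamma> a\<rfloor>" for a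
  have cQ: "of_int (c a) = of_int Q * \<gamma> a" if "a \<in> S" for a
  proof -
    have "of_int Q * \<gamma> a \<in> \<int>" using Q(2) that by blast
    then obtain z where "of_int Q * \<gamma> a = of_int z" by (rule Ints_cases)
    then show ?thesis by (simp add: c_def)
  qed
  have cpos: "\<forall>a\<in>S. c a > 0"
  proof
    fix a assume a: "a \<in> S"
    then have "\<gamma> a > 0" using nonneg inS by (simp add: order_less_le)
    then have "of_int Q * \<gamma> a > 0" using Q(1) by simp
    then have "(of_int (c a) :: real) > 0" by (simp only: cQ[OF a])
    then show "c a > 0" by simp
  qed
  have sym_of: "\<forall>a. \<gamma> a = \<gamma> (- a)" if H: "\<forall>a\<in>S. - a \<in> S \<and> c (- a) = c a"
  proof
    fix a
    show "\<gamma> a = \<gamma> (- a)"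
    proof (cases "a \<in> S")
      case True
      then have "of_int Q * \<gamma> (- a) = of_int Q * \<gamma> a" using H cQ by (metis)
      then show ?thesis using Q(1) by simp
    next
      case False
      have "- a \<notin> S"
      proof
        assume "- a \<in> S"
        then have "- (- a) \<in> S" using H by blast
        then show False using False by simp
      qed
      then show ?thesis using False inS by simp
    qed
  qed
  obtain a1 where a1: "a1 \<in> S" "a1 \<noteq> 0"
  proof (rule ccontr)
    assume "\<not> thesis"
    then have "\<forall>a\<in>S. a = 0" using that by blast
    then have "\<forall>a. \<gamma> a = \<gamma> (- a)" using inS by (metis neg_equal_0_iff_equal)
    then show False using nonsym by simp
  qed
  define B where "B = Max (abs ` S)"
  have bnd: "\<forall>a\<in>S. \<bar>a\<bar> \<le> B"
  proof
    fix a assume "a \<in> S"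
    then show "\<bar>a\<bar> \<le> B" unfolding B_def using finS by (intro Max_ge) auto
  qed
  have "B \<in> abs ` S" unfolding B_def by (rule Max_in) (use finS Sne in auto)
  then obtain a0 where a0S: "a0 \<in> S" and a0B: "\<bar>a0\<bar> = B" by auto
  have a0nz: "a0 \<noteq> 0" using bnd a1 a0B by fastforce
  have amax: "\<forall>a\<in>S. \<bar>a\<bar> \<le> \<bar>a0\<bar>" using bnd a0B by simp
  define N where "N = nat (2 * B * B + 2 * B) + 2 * card S"
  have "good \<gamma> n" if pn: "prime n" and nN: "n > N" for n
  proof -
    have big: "2 * B * B + 2 * B < int n" using nN unfolding N_def by linarith
    have small: "card S + card S < n" using nN unfolding N_def by linarith
    have n1: "n \<ge> 1" using prime_gt_1_nat[OF pn] by simp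
    define z where "z = cis (2 * pi / real n)"
    have polyD: "poly (map_poly of_int (Dp c S n j)) z = of_int Q * lam \<gamma> n j" for j
    proof -
      have "poly (map_poly of_int (Dp c S n j)) z = (\<Sum>a\<in>S. of_int (c a) * EE n (j * a))"
        unfolding z_def by (rule poly_Dp[OF n1])
      also have "\<dots> = (\<Sum>a\<in>S. of_int Q * (of_real (\<gamma> a) * EE n (j * a)))"
      proof (intro sum.cong refl)
        fix a assume a: "a \<in> S"
        have "(of_int (c a) :: complex) = of_real (of_int (c a))" by simp
        also have "\<dots> = of_real (of_int Q * \<gamma> a)" using cQ[OF a] by simp
        finally show "of_int (c a) * EE n (j * a) = of_int Q * (of_real (\<gamma> a) * EE n (j * a))" by simp
      qed
      also have "\<dots> = of_int Q * lam \<gamma> n j"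
        unfolding lam_supp[OF n1 fin] S_def[symmetric] by (simp add: sum_distrib_left)
      finally show ?thesis .
    qed
    have nz: "lam \<gamma> n j \<noteq> 0" if j: "j \<in> {0..<int n}" for j
    proof
      assume l0: "lam \<gamma> n j = 0"
      have root: "poly (map_poly of_int (Dp c S n j)) z = 0" using polyD l0 by simp
      obtain k0 where k0: "k0 < n" "coeff (Dp c S n j) k0 = 0"
        using exists_zero_coeff[OF finS small, of "Dp c S n j" "\<lambda>a. nat ((j * a) mod int n)" "\<lambda>a. nat ((j * a) mod int n)"]
          coeff_pos_witness[OF pn finS cpos bnd big] by blast
      have allz: "\<forall>k<n. coeff (Dp c S n j) k = 0"
        by (rule cyc_zero_coeffs[OF pn degree_Dp[OF finS n1] root[unfolded z_def] k0])
      have "coeff (Dp c S n j) (nat ((j * a0) mod int n)) \<ge> c a0"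
        by (rule coeff_ge[OF pn finS cpos bnd big a0S])
      moreover have "nat ((j * a0) mod int n) < n" using n1 by (simp add: nat_less_iff)
      ultimately show False using allz cpos a0S by fastforce
    qed
    have inj: "inj_on (lam \<gamma> n) {0..<int n}"
    proof (rule inj_onI)
      fix j j' assume j: "j \<in> {0..<int n}" and j': "j' \<in> {0..<int n}" and eq: "lam \<gamma> n j = lam \<gamma> n j'"
      define D where "D = Dp c S n j - Dp c S n j'"
      have d1: "degree (Dp c S n j) \<le> n - 1" using degree_Dp[OF finS n1, of c j] by simp
      have d2: "degree (Dp c S n j') \<le> n - 1" using degree_Dp[OF finS n1, of c j'] by simp
      have "degree D \<le> n - 1" unfolding D_def by (rule degree_diff_le[OF d1 d2])
      then have dD: "degree D < n" using n1 by simp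
      have root: "poly (map_poly of_int D) z = 0"
        unfolding D_def map_of_int_diff using polyD eq by simp
      obtain k0 where k0: "k0 < n" "coeff D k0 = 0"
      proof -
        have "\<exists>k<n. coeff D k = 0"
        proof (rule exists_zero_coeff[OF finS small, of D "\<lambda>a. nat ((j * a) mod int n)" "\<lambda>a. nat ((j' * a) mod int n)"])
          fix k assume "k < n" "coeff D k \<noteq> 0"
          then have "coeff (Dp c S n j) k \<noteq> 0 \<or> coeff (Dp c S n j') k \<noteq> 0" by (auto simp: D_def)
          then show "k \<in> (\<lambda>a. nat ((j * a) mod int n)) ` S \<union> (\<lambda>a. nat ((j' * a) mod int n)) ` S"
            using coeff_pos_witness[OF pn finS cpos bnd big] by blast
        qed
        then show ?thesis using that by blast
      qed
      have allz: "\<forall>k<n. coeff D k = 0"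
        by (rule cyc_zero_coeffs[OF pn dD root[unfolded z_def] k0])
      then have eqc: "\<forall>k<n. coeff (Dp c S n j) k = coeff (Dp c S n j') k" by (simp add: D_def)
      from comb[OF pn finS cpos bnd big eqc j j' a0S a0nz amax]
      show "j = j'" using sym_of nonsym by blast
    qed
    show ?thesis unfolding good_def using n1 inj nz by blast
  qed
  then show ?thesis by blast
qed

theorem theorem4:
  fixes \<gamma> :: "int \<Rightarrow> real"
  assumes nonneg: "\<forall>a. 0 \<le> \<gamma> a"
    and bounded_supp: "finite (supp_dist \<gamma>)"
    and total: "(\<Sum>a\<in>supp_dist \<gamma>. \<gamma> a) = 1"
    and rational: "\<forall>a. \<gamma> a \<in> \<rat>"
  shows "(\<forall>a. \<gamma> a = \<gamma> (- a)) \<or>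
         (\<exists>N::nat. \<forall>n::nat. prime n \<and> n > N \<longrightarrow> reconstructive \<gamma> n)"
proof (cases "\<forall>a. \<gamma> a = \<gamma> (- a)")
  case True then show ?thesis by simp
next
  case False
  obtain N where N: "\<forall>n. prime n \<and> n > N \<longrightarrow> good \<gamma> n"
    using good_large[OF nonneg bounded_supp total rational False] by blast
  have "reconstructive \<gamma> n" if "prime n" "n > N" for n
    unfolding reconstructive_def using recon[of \<gamma> n] N that by blast
  then show ?thesis by blast
qed

end
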